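(* Let $\mathcal{H}_A,\mathcal{H}_B$ be finite-dimensional Hilbert spaces with a fixed reference basis $\{|i\rangle_A\}_{i=1}^{d_A}$ of $\mathcal{H}_A$, and let $\rho_{AB}=\sum_{i,j}|i\rangle\langle j|_A\otimes\rho^B_{ij}$ be a state. If there exist unitaries $U^B_1,\dots,U^B_{d_A}$ on $\mathcal{H}_B$ (equivalently, a unitary $U_{AB}=\sum_i|i\rangle\langle i|_A\otimes U^B_i$) such that $U^B_i\rho^B_{ij}U^{B\dagger}_j=|\rho^B_{ij}|$ for all $i,j$, then $$C^{A|B}_{\max}(\rho_{AB})=\log\left(1+C^{A|B}_{l_1}(\rho_{AB})\right).$$
   Context: $|P|=\sqrt{P^\dagger P}$ and $\|P\|_{\mathrm{tr}}=\mathrm{Tr}|P|$. $D_{\max}(\rho\|\sigma)=\min\{\lambda\ge0:\rho\leq2^\lambda\sigma\}$. The set $\mathcal{IQ}$ consists of states $\sum_kp_k\sigma^A_k\otimes\tau^B_k$ with $\sigma^A_k$ diagonal in $\{|i\rangle_A\}$ and $\tau^B_k$ arbitrary states; $C^{A|B}_{\max}(\rho_{AB})=\min_{\sigma\in\mathcal{IQ}}D_{\max}(\rho_{AB}\|\sigma)$; $C^{A|B}_{l_1}(\rho_{AB})=\sum_{i\neq j}\|\rho^B_{ij}\|_{\mathrm{tr}}$. Logarithms are base 2. *)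

theory Defs
  imports "Jordan_Normal_Form.Schur_Decomposition" "HOL-Library.Extended_Real"
begin

text \<open>Matrices are complex matrices of the JNF library. The bipartite space
H_A tensor H_B is identified with C^(dA*dB), basis vector |i>_A tensor |b>_B
having index i*dB + b (i < dA, b < dB).\<close>

definition mtrace :: "complex mat \<Rightarrow> complex" where
  "mtrace M = (\<Sum>i<dim_row M. M $$ (i, i))"

definition psd :: "complex mat \<Rightarrow> bool" where
  "psd M \<longleftrightarrow> M \<in> carrier_mat (dim_row M) (dim_row M) \<and>
     (\<forall>v \<in> carrier_vec (dim_row M).
        (\<Sum>i<dim_row M. \<Sum>j<dim_row M. cnj (v $ i) * M $$ (i, j) * v $ j) \<in> \<real> \<and>
        0 \<le> Re (\<Sum>i<dim_row M. \<Sum>j<dim_row M. cnj (v $ i) * M $$ (i, j) * v $ j))"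

definition loewner_le :: "complex mat \<Rightarrow> complex mat \<Rightarrow> bool" where
  "loewner_le A B \<longleftrightarrow> dim_row A = dim_row B \<and> dim_col A = dim_col B \<and> psd (B - A)"

definition is_state :: "nat \<Rightarrow> complex mat \<Rightarrow> bool" where
  "is_state n M \<longleftrightarrow> M \<in> carrier_mat n n \<and> psd M \<and> mtrace M = 1"

definition is_unitary :: "nat \<Rightarrow> complex mat \<Rightarrow> bool" where
  "is_unitary n U \<longleftrightarrow> U \<in> carrier_mat n n \<and> U * mat_adjoint U = 1\<^sub>m n"

definition mat_abs :: "complex mat \<Rightarrow> complex mat" where
  "mat_abs P = (THE Q. psd Q \<and> dim_row Q = dim_col P \<and> Q * Q = mat_adjoint P * P)"

definition trace_norm :: "complex mat \<Rightarrow> real" where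
  "trace_norm P = Re (mtrace (mat_abs P))"

definition kron :: "complex mat \<Rightarrow> complex mat \<Rightarrow> complex mat" where
  "kron A B = mat (dim_row A * dim_row B) (dim_col A * dim_col B)
     (\<lambda>(r, c). A $$ (r div dim_row B, c div dim_col B) * B $$ (r mod dim_row B, c mod dim_col B))"

definition block :: "nat \<Rightarrow> complex mat \<Rightarrow> nat \<Rightarrow> nat \<Rightarrow> complex mat" where
  "block dB \<rho> i j = mat dB dB (\<lambda>(a, b). \<rho> $$ (i * dB + a, j * dB + b))"

definition is_diagonal :: "complex mat \<Rightarrow> bool" where
  "is_diagonal M \<longleftrightarrow> (\<forall>i<dim_row M. \<forall>j<dim_col M. i \<noteq> j \<longrightarrow> M $$ (i, j) = 0)"

text \<open>The set IQ: finite convex combinations of sigma_k tensor tau_k, sigma_k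
incoherent (diagonal) states on A, tau_k arbitrary states on B.\<close>
definition IQ :: "nat \<Rightarrow> nat \<Rightarrow> complex mat set" where
  "IQ dA dB = {\<sigma>. \<exists>(n::nat) (p::nat \<Rightarrow> real) s t.
      (\<forall>k<n. 0 \<le> p k \<and> is_state dA (s k) \<and> is_diagonal (s k) \<and> is_state dB (t k)) \<and>
      (\<Sum>k<n. p k) = 1 \<and>
      \<sigma> = mat (dA * dB) (dA * dB) (\<lambda>rc. \<Sum>k<n. complex_of_real (p k) * kron (s k) (t k) $$ rc)}"

text \<open>D_max(rho||sigma) = min{lambda >= 0 : rho <= 2^lambda sigma}; infinite if no such lambda.\<close>
definition D_max :: "complex mat \<Rightarrow> complex mat \<Rightarrow> ereal" where
  "D_max \<rho> \<sigma> = Inf {ereal l | l. 0 \<le> l \<and> loewner_le \<rho> (complex_of_real (2 powr l) \<cdot>\<^sub>m \<sigma>)}"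

definition C_max :: "nat \<Rightarrow> nat \<Rightarrow> complex mat \<Rightarrow> ereal" where
  "C_max dA dB \<rho> = Inf (D_max \<rho> ` IQ dA dB)"

definition C_l1 :: "nat \<Rightarrow> nat \<Rightarrow> complex mat \<Rightarrow> real" where
  "C_l1 dA dB \<rho> = (\<Sum>i<dA. \<Sum>j\<in>{..<dA} - {i}. trace_norm (block dB \<rho> i j))"

end

theory Submission
  imports Defs
begin

lemma adj_def': "mat_adjoint (A::complex mat) = mat (dim_col A) (dim_row A) (\<lambda>(i,j). cnj (A $$ (j,i)))"
  by (rule eq_matI, auto simp: mat_adjoint_def mat_of_rows_def)

lemma adj_dim[simp]: "dim_row (mat_adjoint (A::complex mat)) = dim_col A" "dim_col (mat_adjoint A) = dim_row A"
  by (simp_all add: adj_def')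

lemma adj_index[simp]: "i < dim_col A \<Longrightarrow> j < dim_row A \<Longrightarrow> mat_adjoint (A::complex mat) $$ (i,j) = cnj (A $$ (j,i))"
  by (simp add: adj_def')

lemma adj_carrier[simp]: "(A::complex mat) \<in> carrier_mat n m \<Longrightarrow> mat_adjoint A \<in> carrier_mat m n"
  by (intro carrier_matI, auto)

lemma adj_adj[simp]: "mat_adjoint (mat_adjoint (A::complex mat)) = A"
  by (rule eq_matI, auto)

lemma adj_mult: "(A::complex mat) \<in> carrier_mat n k \<Longrightarrow> B \<in> carrier_mat k m \<Longrightarrow>
   mat_adjoint (A*B) = mat_adjoint B * mat_adjoint A"
  by (rule eq_matI) (auto simp: scalar_prod_def mult.commute)

lemma adj_one[simp]: "mat_adjoint (1\<^sub>m n :: complex mat) = 1\<^sub>m n"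
  by (rule eq_matI, auto)

lemma adj_zero[simp]: "mat_adjoint (0\<^sub>m n m :: complex mat) = 0\<^sub>m m n"
  by (rule eq_matI, auto)

lemma adj_add: "(A::complex mat) \<in> carrier_mat n m \<Longrightarrow> B \<in> carrier_mat n m \<Longrightarrow>
   mat_adjoint (A+B) = mat_adjoint A + mat_adjoint B"
  by (rule eq_matI, auto)

lemma adj_minus: "(A::complex mat) \<in> carrier_mat n m \<Longrightarrow> B \<in> carrier_mat n m \<Longrightarrow>
   mat_adjoint (A-B) = mat_adjoint A - mat_adjoint B"
  by (rule eq_matI, auto)

lemma adj_smult: "mat_adjoint (c \<cdot>\<^sub>m (A::complex mat)) = cnj c \<cdot>\<^sub>m mat_adjoint A"
  by (rule eq_matI, auto)

lemma adj_four_block: "(A::complex mat) \<in> carrier_mat n1 m1 \<Longrightarrow> B \<in> carrier_mat n1 m2 \<Longrightarrow>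
  C \<in> carrier_mat n2 m1 \<Longrightarrow> D \<in> carrier_mat n2 m2 \<Longrightarrow>
  mat_adjoint (four_block_mat A B C D) = four_block_mat (mat_adjoint A) (mat_adjoint C) (mat_adjoint B) (mat_adjoint D)"
  by (rule eq_matI) auto

lemma unitary_left: assumes "(U::complex mat) \<in> carrier_mat n n" "U * mat_adjoint U = 1\<^sub>m n"
  shows "mat_adjoint U * U = 1\<^sub>m n"
  using mat_mult_left_right_inverse[of U n "mat_adjoint U"] assms by auto

lemma unitary_right: assumes "(U::complex mat) \<in> carrier_mat n n" "mat_adjoint U * U = 1\<^sub>m n"
  shows "U * mat_adjoint U = 1\<^sub>m n"
  using mat_mult_left_right_inverse[of "mat_adjoint U" n U] assms by auto


lemma cscalar_self: assumes "(v::complex vec) \<in> carrier_vec n"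
  shows "v \<bullet>c v = complex_of_real (\<Sum>k<n. (cmod (v$k))\<^sup>2)"
proof -
  have "v \<bullet>c v = (\<Sum>k<n. v$k * cnj (v$k))" using assms unfolding scalar_prod_def by (auto simp: atLeast0LessThan)
  also have "\<dots> = (\<Sum>k<n. complex_of_real ((cmod (v$k))\<^sup>2))" by (rule sum.cong[OF refl], rule complex_norm_square[symmetric])
  finally show ?thesis by (simp only: of_real_sum)
qed

lemma adjW_index: "i < dim_col W \<Longrightarrow> j < dim_col W \<Longrightarrow>
   (mat_adjoint (W::complex mat) * W) $$ (i,j) = col W j \<bullet>c col W i"
  by (simp add: scalar_prod_def mult.commute)

lemma unit_eigen: assumes A: "(A::complex mat) \<in> carrier_mat n n" and n: "n > 0"
  shows "\<exists>u k. u \<in> carrier_vec n \<and> u \<bullet>c u = 1 \<and> A *\<^sub>v u = k \<cdot>\<^sub>v u"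
proof -
  have d: "degree (char_poly A) > 0" using degree_monic_char_poly[OF A] n by auto
  hence "\<not> constant (poly (char_poly A))" by (simp add: constant_degree)
  from fundamental_theorem_of_algebra[OF this] obtain k where "poly (char_poly A) k = 0" by auto
  hence "eigenvalue A k" using eigenvalue_root_char_poly[OF A] by auto
  then obtain v where ev: "eigenvector A v k" unfolding eigenvalue_def by auto
  hence v: "v \<in> carrier_vec n" "v \<noteq> 0\<^sub>v n" "A *\<^sub>v v = k \<cdot>\<^sub>v v" unfolding eigenvector_def using A by auto
  define s where "s = (\<Sum>i<n. (cmod (v$i))\<^sup>2)"
  obtain i where i: "i < n" "v $ i \<noteq> 0" using v(1,2) by (metis eq_vecI carrier_vecD index_zero_vec)
  have "(cmod (v$i))\<^sup>2 \<le> s" unfolding s_def by (rule member_le_sum, insert i, auto)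
  moreover have "(cmod (v$i))\<^sup>2 > 0" using i by auto
  ultimately have s: "s > 0" by linarith
  define u where "u = complex_of_real (1/sqrt s) \<cdot>\<^sub>v v"
  have u: "u \<in> carrier_vec n" unfolding u_def using v by auto
  have "u \<bullet>c u = complex_of_real (\<Sum>j<n. (cmod (u$j))\<^sup>2)" by (rule cscalar_self[OF u])
  also have "(\<Sum>j<n. (cmod (u$j))\<^sup>2) = (\<Sum>j<n. (cmod (v$j))\<^sup>2 / s)"
  proof (rule sum.cong[OF refl])
    fix j assume j: "j \<in> {..<n}"
    have "cmod (u$j) = cmod (v$j) / sqrt s" using j v s by (simp add: u_def norm_mult norm_divide)
    thus "(cmod (u$j))\<^sup>2 = (cmod (v$j))\<^sup>2 / s" using s by (simp add: power_divide)
  qed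
  also have "\<dots> = 1" using s unfolding s_def[symmetric] sum_divide_distrib[symmetric] by auto
  finally have u1: "u \<bullet>c u = 1" by simp
  have "A *\<^sub>v u = k \<cdot>\<^sub>v u" unfolding u_def using v A by (auto simp: mult_mat_vec smult_smult_assoc mult.commute)
  with u u1 show ?thesis by blast
qed


lemma unitary_completion: assumes u: "(u::complex vec) \<in> carrier_vec n" and u1: "u \<bullet>c u = 1"
  shows "\<exists>W. W \<in> carrier_mat n n \<and> mat_adjoint W * W = 1\<^sub>m n \<and> col W 0 = u"
proof -
  have n: "n > 0"
  proof (rule ccontr)
    assume "\<not> n > 0"
    hence "n = 0" by auto
    hence "u \<bullet>c u = 0" using u unfolding scalar_prod_def by auto
    thus False using u1 by auto
  qed
  have u0: "u \<noteq> 0\<^sub>v n" using u1 by auto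
  interpret cof_vec_space n "TYPE(complex)" .
  note bc = basis_completion[OF u u0]
  obtain vs where bv: "basis_completion u = u # vs"
    using bc(6,7) n by (cases "basis_completion u", auto)
  define ws where "ws = gram_schmidt n (basis_completion u)"
  note gs = gram_schmidt_result[OF bc(2) bc(4) bc(5) ws_def]
  have hd: "hd ws = u" unfolding ws_def bv using gram_schmidt_hd[OF u] by simp
  have lws: "length ws = n" using gs bc by auto
  have wsc: "\<And>i. i < n \<Longrightarrow> ws ! i \<in> carrier_vec n" using gs(3) lws by auto
  have ws0: "ws ! 0 = u" using hd n lws by (cases ws, auto)
  define c where "c i = 1 / sqrt (Re (ws!i \<bullet>c ws!i))" for i
  define ws' where "ws' = map (\<lambda>i. complex_of_real (c i) \<cdot>\<^sub>v ws ! i) [0..<n]"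
  have lws': "length ws' = n" unfolding ws'_def by auto
  have ws'i: "\<And>i. i < n \<Longrightarrow> ws' ! i = complex_of_real (c i) \<cdot>\<^sub>v ws ! i" unfolding ws'_def by auto
  have ws'c: "\<And>i. i < n \<Longrightarrow> ws' ! i \<in> carrier_vec n" using ws'i wsc by auto
  define W where "W = mat_of_cols n ws'"
  have W: "W \<in> carrier_mat n n" unfolding W_def using lws' by (metis mat_of_cols_carrier(1))
  have colW: "\<And>i. i < n \<Longrightarrow> col W i = ws' ! i" unfolding W_def using lws' ws'c by auto
  have sq: "\<And>i. i < n \<Longrightarrow> ws!i \<bullet>c ws!i = complex_of_real (Re (ws!i \<bullet>c ws!i)) \<and> Re (ws!i \<bullet>c ws!i) > 0"
  proof -
    fix i assume i: "i < n"
    define s where "s = (\<Sum>k<n. (cmod (ws!i$k))\<^sup>2)"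
    have e: "ws!i \<bullet>c ws!i = complex_of_real s" unfolding s_def by (rule cscalar_self[OF wsc[OF i]])
    have "ws!i \<bullet>c ws!i \<noteq> 0" using gs(2) i lws unfolding corthogonal_def by auto
    hence "s \<noteq> 0" using e by auto
    moreover have "s \<ge> 0" unfolding s_def by (rule sum_nonneg, auto)
    ultimately show "ws!i \<bullet>c ws!i = complex_of_real (Re (ws!i \<bullet>c ws!i)) \<and> Re (ws!i \<bullet>c ws!i) > 0"
      using e by auto
  qed
  have prod: "\<And>i j. i < n \<Longrightarrow> j < n \<Longrightarrow> ws'!j \<bullet>c ws'!i = complex_of_real (c i * c j) * (ws!j \<bullet>c ws!i)"
  proof -
    fix i j assume i: "i < n" and j: "j < n"
    show "ws'!j \<bullet>c ws'!i = complex_of_real (c i * c j) * (ws!j \<bullet>c ws!i)"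
      unfolding ws'i[OF i] ws'i[OF j] using wsc[OF i] wsc[OF j]
      by (simp add: scalar_prod_def sum_distrib_left algebra_simps)
  qed
  have "mat_adjoint W * W = 1\<^sub>m n"
  proof (rule eq_matI)
    fix i j assume i: "i < dim_row (1\<^sub>m n)" and j: "j < dim_col (1\<^sub>m n)"
    hence i: "i < n" and j: "j < n" by auto
    have "(mat_adjoint W * W) $$ (i,j) = ws'!j \<bullet>c ws'!i"
      using adjW_index[of i W j] W i j colW by auto
    also have "\<dots> = complex_of_real (c i * c j) * (ws!j \<bullet>c ws!i)" by (rule prod[OF i j])
    also have "\<dots> = 1\<^sub>m n $$ (i,j)"
    proof (cases "i = j")
      case True
      from sq[OF i] have s: "ws!i \<bullet>c ws!i = complex_of_real (Re (ws!i \<bullet>c ws!i))" "Re (ws!i \<bullet>c ws!i) > 0" by auto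
      have "c i * c i * Re (ws!i \<bullet>c ws!i) = 1" unfolding c_def using s(2)
        by (simp add: divide_simps)
      then show ?thesis using True i s(1) by (metis index_one_mat(1) of_real_1 of_real_mult)
    next
      case False
      have "ws!j \<bullet>c ws!i = 0" using gs(2) i j lws False unfolding corthogonal_def by auto
      then show ?thesis using False i j by auto
    qed
    finally show "(mat_adjoint W * W) $$ (i,j) = 1\<^sub>m n $$ (i,j)" .
  qed (insert W, auto)
  moreover have "col W 0 = u"
  proof -
    have "Re (ws!0 \<bullet>c ws!0) = 1" using ws0 u1 by simp
    hence "c 0 = 1" unfolding c_def by simp
    thus ?thesis using colW[OF n] ws'i[OF n] ws0 u by auto
  qed
  ultimately show ?thesis using W by blast
qed


lemma spectral_aux:
  "(A::complex mat) \<in> carrier_mat n n \<Longrightarrow> mat_adjoint A = A \<Longrightarrow>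
   \<exists>V D. V \<in> carrier_mat n n \<and> D \<in> carrier_mat n n \<and> mat_adjoint V * V = 1\<^sub>m n \<and> diagonal_mat D \<and> A = V * D * mat_adjoint V"
proof (induction n arbitrary: A)
  case 0
  show ?case
    by (rule exI[of _ "1\<^sub>m 0"], rule exI[of _ A], insert 0, auto simp: diagonal_mat_def intro!: eq_matI)
next
  case (Suc m)
  let ?n = "Suc m"
  have A: "A \<in> carrier_mat ?n ?n" and H: "mat_adjoint A = A" using Suc.prems by auto
  obtain u k where u: "u \<in> carrier_vec ?n" "u \<bullet>c u = 1" "A *\<^sub>v u = k \<cdot>\<^sub>v u" using unit_eigen[OF A] by auto
  obtain W where W: "W \<in> carrier_mat ?n ?n" "mat_adjoint W * W = 1\<^sub>m ?n" "col W 0 = u"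
    using unitary_completion[OF u(1,2)] by auto
  have WW: "W * mat_adjoint W = 1\<^sub>m ?n" using unitary_right W by auto
  have Wa: "mat_adjoint W \<in> carrier_mat ?n ?n" using W by auto
  have as: "\<And>X Y Z. X \<in> carrier_mat ?n ?n \<Longrightarrow> Y \<in> carrier_mat ?n ?n \<Longrightarrow> Z \<in> carrier_mat ?n ?n \<Longrightarrow> X * Y * Z = X * (Y * Z)"
    by auto
  define B where "B = mat_adjoint W * A * W"
  have B: "B \<in> carrier_mat ?n ?n" unfolding B_def using W A by auto
  have BH: "mat_adjoint B = B"
  proof -
    have "mat_adjoint B = mat_adjoint W * mat_adjoint (mat_adjoint W * A)"
      unfolding B_def by (rule adj_mult[of _ ?n ?n], insert W A, auto)
    also have "mat_adjoint (mat_adjoint W * A) = mat_adjoint A * W"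
      by (subst adj_mult[of _ ?n ?n], insert W A, auto)
    finally show ?thesis unfolding B_def H using as[OF Wa A W(1)] by auto
  qed
  have colB: "col B 0 = k \<cdot>\<^sub>v unit_vec ?n 0"
  proof -
    have "col B 0 = (mat_adjoint W * A) *\<^sub>v col W 0" unfolding B_def
      by (rule col_mult2, insert W A, auto)
    also have "\<dots> = mat_adjoint W *\<^sub>v (A *\<^sub>v u)" using W A u assoc_mult_mat_vec[OF Wa A u(1)] by auto
    also have "\<dots> = k \<cdot>\<^sub>v (mat_adjoint W *\<^sub>v col W 0)" using u W Wa by (auto simp: mult_mat_vec)
    also have "mat_adjoint W *\<^sub>v col W 0 = col (mat_adjoint W * W) 0"
      by (rule col_mult2[symmetric], insert W Wa, auto)
    also have "\<dots> = unit_vec ?n 0" unfolding W by auto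
    finally show ?thesis .
  qed
  have Bi0: "\<And>i. i < ?n \<Longrightarrow> B $$ (i,0) = (if i = 0 then k else 0)"
  proof -
    fix i assume i: "i < ?n"
    have "B $$ (i,0) = col B 0 $ i" using B i by auto
    thus "B $$ (i,0) = (if i = 0 then k else 0)" unfolding colB using i by auto
  qed
  have B0j: "\<And>j. 0 < j \<Longrightarrow> j < ?n \<Longrightarrow> B $$ (0,j) = 0"
  proof -
    fix j assume j: "0 < j" "j < ?n"
    have "B $$ (0,j) = mat_adjoint B $$ (0,j)" using BH by simp
    also have "\<dots> = cnj (B $$ (j,0))" using B j by auto
    finally show "B $$ (0,j) = 0" using Bi0[of j] j by auto
  qed
  obtain B1 B2 B3 C where spl: "split_block B 1 1 = (B1,B2,B3,C)" by (cases "split_block B 1 1", auto)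
  have dB: "dim_row B = 1 + m" "dim_col B = 1 + m" using B by auto
  note sb = split_block[OF spl dB]
  have B2: "B2 = 0\<^sub>m 1 m" using spl B0j B unfolding split_block_def Let_def by (auto intro!: eq_matI)
  have B3: "B3 = 0\<^sub>m m 1" using spl Bi0 B unfolding split_block_def Let_def by (auto intro!: eq_matI)
  have Cidx: "\<And>i j. i < m \<Longrightarrow> j < m \<Longrightarrow> C $$ (i,j) = B $$ (i+1, j+1)"
    using spl B unfolding split_block_def Let_def by auto
  have C: "C \<in> carrier_mat m m" using sb by auto
  have CH: "mat_adjoint C = C"
  proof (rule eq_matI)
    fix i j assume "i < dim_row C" "j < dim_col C"
    hence i: "i < m" and j: "j < m" using C by auto
    have "mat_adjoint C $$ (i,j) = cnj (B $$ (j+1,i+1))" using C i j Cidx by auto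
    also have "\<dots> = mat_adjoint B $$ (i+1,j+1)" using B i j by auto
    also have "\<dots> = C $$ (i,j)" using BH Cidx i j by auto
    finally show "mat_adjoint C $$ (i,j) = C $$ (i,j)" .
  qed (insert C, auto)
  obtain V3 D3 where V3: "V3 \<in> carrier_mat m m" "D3 \<in> carrier_mat m m" "mat_adjoint V3 * V3 = 1\<^sub>m m"
    "diagonal_mat D3" "C = V3 * D3 * mat_adjoint V3"
    using Suc.IH[OF C CH] by auto
  have B1: "B1 \<in> carrier_mat 1 1" using sb by auto
  define V1 where "V1 = four_block_mat (1\<^sub>m 1) (0\<^sub>m 1 m) (0\<^sub>m m 1) V3"
  define D where "D = four_block_mat B1 (0\<^sub>m 1 m) (0\<^sub>m m 1) D3"
  have V1: "V1 \<in> carrier_mat ?n ?n" unfolding V1_def using V3 four_block_carrier_mat[of "1\<^sub>m 1" 1 1 V3 m m] by auto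
  have D: "D \<in> carrier_mat ?n ?n" unfolding D_def using V3 B1 four_block_carrier_mat[of B1 1 1 D3 m m] by auto
  have V1a: "mat_adjoint V1 = four_block_mat (1\<^sub>m 1) (0\<^sub>m 1 m) (0\<^sub>m m 1) (mat_adjoint V3)"
    unfolding V1_def by (subst adj_four_block[of _ 1 1 _ m _ m], insert V3, auto)
  have V1u: "mat_adjoint V1 * V1 = 1\<^sub>m ?n"
    unfolding V1a unfolding V1_def
    by (subst mult_four_block_mat[of _ 1 1 _ m _ m], insert V3, auto)
  have V1D: "V1 * D = four_block_mat B1 (0\<^sub>m 1 m) (0\<^sub>m m 1) (V3 * D3)"
    unfolding V1_def D_def
    by (subst mult_four_block_mat[of _ 1 1 _ m _ m], insert V3 B1, auto)
  have "V1 * D * mat_adjoint V1 = four_block_mat B1 (0\<^sub>m 1 m) (0\<^sub>m m 1) (V3 * D3 * mat_adjoint V3)"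
    unfolding V1a V1D
    by (subst mult_four_block_mat[of _ 1 1 _ m _ m], insert V3 B1, auto)
  hence VDV: "V1 * D * mat_adjoint V1 = B" using sb B2 B3 V3(5) by simp
  define V where "V = W * V1"
  have V: "V \<in> carrier_mat ?n ?n" unfolding V_def using W V1 by auto
  have Va: "mat_adjoint V = mat_adjoint V1 * mat_adjoint W" unfolding V_def by (rule adj_mult[of _ ?n ?n], insert W V1, auto)
  have V1a': "mat_adjoint V1 \<in> carrier_mat ?n ?n" using V1 by auto
  have WV1: "W * V1 \<in> carrier_mat ?n ?n" using W V1 by auto
  have VD: "V1 * D \<in> carrier_mat ?n ?n" using V1 D by auto
  have VW: "mat_adjoint V1 * mat_adjoint W \<in> carrier_mat ?n ?n" using V1a' Wa by auto
  have X: "V1 * D * mat_adjoint V1 \<in> carrier_mat ?n ?n" using VD V1a' by auto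
  have "mat_adjoint V * V = mat_adjoint V1 * mat_adjoint W * (W * V1)" unfolding Va unfolding V_def ..
  also have "\<dots> = mat_adjoint V1 * ((mat_adjoint W * W) * V1)"
    using assoc_mult_mat[OF V1a' Wa WV1] assoc_mult_mat[OF Wa W(1) V1] by simp
  also have "\<dots> = 1\<^sub>m ?n" using W V1 V1u by simp
  finally have Vu: "mat_adjoint V * V = 1\<^sub>m ?n" .
  have "V * D * mat_adjoint V = W * V1 * D * (mat_adjoint V1 * mat_adjoint W)"
    unfolding Va unfolding V_def ..
  also have "\<dots> = W * (((V1 * D) * mat_adjoint V1) * mat_adjoint W)"
    using assoc_mult_mat[OF W(1) V1 D] assoc_mult_mat[OF W(1) VD VW] assoc_mult_mat[OF VD V1a' Wa] by simp
  also have "\<dots> = W * B * mat_adjoint W" unfolding VDV using assoc_mult_mat[OF W(1) B Wa] by simp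
  also have "W * B = A * W"
  proof -
    have WaA: "mat_adjoint W * A \<in> carrier_mat ?n ?n" using Wa A by auto
    have "W * B = (W * (mat_adjoint W * A)) * W" unfolding B_def using assoc_mult_mat[OF W(1) WaA W(1)] by simp
    also have "W * (mat_adjoint W * A) = A" using assoc_mult_mat[OF W(1) Wa A] WW A by simp
    finally show ?thesis .
  qed
  also have "A * W * mat_adjoint W = A" using assoc_mult_mat[OF A W(1) Wa] WW A by simp
  finally have AVD: "A = V * D * mat_adjoint V" ..
  have Dd: "diagonal_mat D"
    unfolding diagonal_mat_def D_def using V3(2,4) B1 unfolding diagonal_mat_def by auto
  show ?case using V D Vu Dd AVD by blast
qed


definition sf :: "complex mat \<Rightarrow> complex vec \<Rightarrow> complex vec \<Rightarrow> complex" where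
  "sf M u w = (\<Sum>i<dim_row M. \<Sum>j<dim_col M. cnj (u $ i) * M $$ (i,j) * w $ j)"

lemma psd_sf: assumes n: "dim_row M = n"
  shows "psd M \<longleftrightarrow> M \<in> carrier_mat n n \<and>
   (\<forall>v \<in> carrier_vec n. sf M v v \<in> \<real> \<and> 0 \<le> Re (sf M v v))"
  unfolding psd_def sf_def n
proof (cases "M \<in> carrier_mat n n")
  case True
  then have "dim_col M = n" by auto
  then show "(M \<in> carrier_mat n n \<and>
     (\<forall>v\<in>carrier_vec n. (\<Sum>i<n. \<Sum>j<n. cnj (v $ i) * M $$ (i, j) * v $ j) \<in> \<real> \<and> 0 \<le> Re (\<Sum>i<n. \<Sum>j<n. cnj (v $ i) * M $$ (i, j) * v $ j))) =
    (M \<in> carrier_mat n n \<and>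
     (\<forall>v\<in>carrier_vec n. (\<Sum>i<n. \<Sum>j<dim_col M. cnj (v $ i) * M $$ (i, j) * v $ j) \<in> \<real> \<and>
          0 \<le> Re (\<Sum>i<n. \<Sum>j<dim_col M. cnj (v $ i) * M $$ (i, j) * v $ j)))" by simp
qed simp

lemma sf_mult: assumes "A \<in> carrier_mat n m" "B \<in> carrier_mat m k" "w \<in> carrier_vec k"
  shows "sf (A * B) u w = sf A u (B *\<^sub>v w)"
proof -
  have "sf (A*B) u w = (\<Sum>i<n. \<Sum>j<k. \<Sum>l<m. cnj (u$i) * A$$(i,l) * B$$(l,j) * w$j)"
    unfolding sf_def using assms
    by (auto simp: scalar_prod_def sum_distrib_left sum_distrib_right atLeast0LessThan mult_ac intro!: sum.cong)
  also have "\<dots> = (\<Sum>i<n. \<Sum>l<m. \<Sum>j<k. cnj (u$i) * A$$(i,l) * B$$(l,j) * w$j)"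
    by (rule sum.cong[OF refl], rule sum.swap)
  also have "\<dots> = sf A u (B *\<^sub>v w)" unfolding sf_def using assms
    by (auto simp: scalar_prod_def sum_distrib_left atLeast0LessThan mult_ac intro!: sum.cong)
  finally show ?thesis .
qed

lemma sf_adj_mult: assumes "A \<in> carrier_mat m n" "B \<in> carrier_mat m k" "u \<in> carrier_vec n"
  shows "sf (mat_adjoint A * B) u w = sf B (A *\<^sub>v u) w"
proof -
  have "sf (mat_adjoint A * B) u w = (\<Sum>i<n. \<Sum>j<k. \<Sum>l<m. cnj (u$i) * cnj (A$$(l,i)) * B$$(l,j) * w$j)"
    unfolding sf_def using assms
    by (auto simp: scalar_prod_def sum_distrib_left sum_distrib_right atLeast0LessThan mult_ac intro!: sum.cong)
  also have "\<dots> = (\<Sum>i<n. \<Sum>l<m. \<Sum>j<k. cnj (u$i) * cnj (A$$(l,i)) * B$$(l,j) * w$j)"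
    by (rule sum.cong[OF refl], rule sum.swap)
  also have "\<dots> = (\<Sum>l<m. \<Sum>i<n. \<Sum>j<k. cnj (u$i) * cnj (A$$(l,i)) * B$$(l,j) * w$j)"
    by (rule sum.swap)
  also have "\<dots> = (\<Sum>l<m. \<Sum>j<k. \<Sum>i<n. cnj (u$i) * cnj (A$$(l,i)) * B$$(l,j) * w$j)"
    by (rule sum.cong[OF refl], rule sum.swap)
  also have "\<dots> = sf B (A *\<^sub>v u) w" unfolding sf_def using assms
    by (auto simp: scalar_prod_def sum_distrib_left sum_distrib_right atLeast0LessThan mult_ac intro!: sum.cong)
  finally show ?thesis .
qed

lemma sf_add_left: "u1 \<in> carrier_vec (dim_row M) \<Longrightarrow> u2 \<in> carrier_vec (dim_row M) \<Longrightarrow>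
  sf M (u1 + u2) w = sf M u1 w + sf M u2 w"
  unfolding sf_def by (simp add: algebra_simps sum.distrib)

lemma sf_add_right: "w1 \<in> carrier_vec (dim_col M) \<Longrightarrow> w2 \<in> carrier_vec (dim_col M) \<Longrightarrow>
  sf M u (w1 + w2) = sf M u w1 + sf M u w2"
  unfolding sf_def by (simp add: algebra_simps sum.distrib)

lemma sf_smult_left: "u \<in> carrier_vec (dim_row M) \<Longrightarrow> sf M (c \<cdot>\<^sub>v u) w = cnj c * sf M u w"
  unfolding sf_def by (simp add: algebra_simps sum_distrib_left)

lemma sf_smult_right: "w \<in> carrier_vec (dim_col M) \<Longrightarrow> sf M u (c \<cdot>\<^sub>v w) = c * sf M u w"
  unfolding sf_def by (simp add: algebra_simps sum_distrib_left)

lemma sf_unit: assumes i: "i < dim_row M" and j: "j < dim_col M"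
  shows "sf M (unit_vec (dim_row M) i) (unit_vec (dim_col M) j) = M $$ (i,j)"
proof -
  have "sf M (unit_vec (dim_row M) i) (unit_vec (dim_col M) j) =
    (\<Sum>a<dim_row M. \<Sum>b<dim_col M. (if a = i then 1 else 0) * M $$ (a,b) * (if b = j then 1 else 0))"
    unfolding sf_def using i j by (intro sum.cong refl, auto)
  also have "\<dots> = (\<Sum>a<dim_row M. (if a = i then M $$ (a,j) else 0))"
    by (rule sum.cong[OF refl], insert j, auto simp: if_distrib sum.delta cong: if_cong)
  also have "\<dots> = M $$ (i,j)" using i by (simp add: sum.delta)
  finally show ?thesis .
qed

lemma sf_mat_add: "M1 \<in> carrier_mat n m \<Longrightarrow> M2 \<in> carrier_mat n m \<Longrightarrow> sf (M1 + M2) u w = sf M1 u w + sf M2 u w"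
  unfolding sf_def by (simp add: algebra_simps sum.distrib)

lemma sf_mat_minus: "M1 \<in> carrier_mat n m \<Longrightarrow> M2 \<in> carrier_mat n m \<Longrightarrow> sf (M1 - M2) u w = sf M1 u w - sf M2 u w"
  unfolding sf_def by (simp add: algebra_simps sum_subtractf)

lemma sf_mat_smult: "sf (c \<cdot>\<^sub>m M) u w = c * sf M u w"
  unfolding sf_def by (simp add: algebra_simps sum_distrib_left)


lemma sf_unit_n: assumes "M \<in> carrier_mat n n" "a < n" "b < n"
  shows "sf M (unit_vec n a) (unit_vec n b) = M $$ (a,b)"
  using sf_unit[of a M b] assms by auto

lemma real_form_herm: assumes M: "M \<in> carrier_mat n n" and R: "\<forall>v\<in>carrier_vec n. sf M v v \<in> \<real>"
  shows "mat_adjoint M = M"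
proof (rule eq_matI)
  fix i j assume "i < dim_row M" "j < dim_col M"
  hence i: "i < n" and j: "j < n" using M by auto
  have dM: "dim_row M = n" "dim_col M = n" using M by auto
  define ei where "ei = (unit_vec n i :: complex vec)"
  define ej where "ej = (unit_vec n j :: complex vec)"
  have e: "ei \<in> carrier_vec n" "ej \<in> carrier_vec n" unfolding ei_def ej_def by auto
  have key: "sf M (ei + c \<cdot>\<^sub>v ej) (ei + c \<cdot>\<^sub>v ej) = M$$(i,i) + c * M$$(i,j) + cnj c * M$$(j,i) + cnj c * c * M$$(j,j)" for c
  proof -
    have c: "c \<cdot>\<^sub>v ej \<in> carrier_vec n" using e by auto
    have "sf M (ei + c \<cdot>\<^sub>v ej) (ei + c \<cdot>\<^sub>v ej) = sf M ei (ei + c \<cdot>\<^sub>v ej) + sf M (c \<cdot>\<^sub>v ej) (ei + c \<cdot>\<^sub>v ej)"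
      by (rule sf_add_left, insert e c dM, auto)
    also have "sf M ei (ei + c \<cdot>\<^sub>v ej) = sf M ei ei + sf M ei (c \<cdot>\<^sub>v ej)"
      by (rule sf_add_right, insert e c dM, auto)
    also have "sf M (c \<cdot>\<^sub>v ej) (ei + c \<cdot>\<^sub>v ej) = sf M (c \<cdot>\<^sub>v ej) ei + sf M (c \<cdot>\<^sub>v ej) (c \<cdot>\<^sub>v ej)"
      by (rule sf_add_right, insert e c dM, auto)
    also have "sf M ei (c \<cdot>\<^sub>v ej) = c * sf M ei ej" by (rule sf_smult_right, insert e dM, auto)
    also have "sf M (c \<cdot>\<^sub>v ej) ei = cnj c * sf M ej ei" by (rule sf_smult_left, insert e dM, auto)
    also have "sf M (c \<cdot>\<^sub>v ej) (c \<cdot>\<^sub>v ej) = cnj c * sf M ej (c \<cdot>\<^sub>v ej)" by (rule sf_smult_left, insert e dM, auto)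
    also have "sf M ej (c \<cdot>\<^sub>v ej) = c * sf M ej ej" by (rule sf_smult_right, insert e dM, auto)
    finally show ?thesis unfolding ei_def ej_def using sf_unit_n[OF M] i j by (simp add: algebra_simps)
  qed
  have r0: "sf M ei ei \<in> \<real>" "sf M ej ej \<in> \<real>" using R e by auto
  hence r0': "Im (M$$(i,i)) = 0" "Im (M$$(j,j)) = 0" unfolding ei_def ej_def using sf_unit_n[OF M] i j
    by (auto simp: complex_is_Real_iff)
  have r1: "sf M (ei + 1 \<cdot>\<^sub>v ej) (ei + 1 \<cdot>\<^sub>v ej) \<in> \<real>" using R e by auto
  have r2: "sf M (ei + \<i> \<cdot>\<^sub>v ej) (ei + \<i> \<cdot>\<^sub>v ej) \<in> \<real>" using R e by auto
  from r1[unfolded key] r0' have i1: "Im (M$$(i,j)) + Im (M$$(j,i)) = 0" by (simp add: complex_is_Real_iff)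
  from r2[unfolded key] r0' have i2: "Re (M$$(i,j)) - Re (M$$(j,i)) = 0" by (simp add: complex_is_Real_iff)
  show "mat_adjoint M $$ (i,j) = M $$ (i,j)" using i j dM i1 i2 by (auto intro: complex_eqI)
qed (insert M, auto)

lemma psd_herm: assumes "psd M" shows "mat_adjoint M = M"
proof -
  have "M \<in> carrier_mat (dim_row M) (dim_row M)" "\<forall>v\<in>carrier_vec (dim_row M). sf M v v \<in> \<real>"
    using assms psd_sf[OF refl] by auto
  thus ?thesis using real_form_herm by blast
qed


definition dmat :: "nat \<Rightarrow> (nat \<Rightarrow> real) \<Rightarrow> complex mat" where
  "dmat n d = mat n n (\<lambda>(i,j). if i = j then complex_of_real (d i) else 0)"

lemma dmat_carrier[simp]: "dmat n d \<in> carrier_mat n n" unfolding dmat_def by auto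
lemma dmat_dim[simp]: "dim_row (dmat n d) = n" "dim_col (dmat n d) = n" unfolding dmat_def by auto

lemma dmat_mult: "dmat n a * dmat n b = dmat n (\<lambda>k. a k * b k)"
proof (rule eq_matI)
  fix i j assume "i < dim_row (dmat n (\<lambda>k. a k * b k))" "j < dim_col (dmat n (\<lambda>k. a k * b k))"
  hence i: "i < n" and j: "j < n" by auto
  have "(dmat n a * dmat n b) $$ (i,j) = (\<Sum>k<n. (if i = k then complex_of_real (a i) else 0) * (if k = j then complex_of_real (b k) else 0))"
    using i j by (simp add: dmat_def scalar_prod_def atLeast0LessThan)
  also have "\<dots> = (if i = j then complex_of_real (a i * b i) else 0)"
    using i j by (auto simp: if_distrib sum.delta cong: if_cong)
  finally show "(dmat n a * dmat n b) $$ (i,j) = dmat n (\<lambda>k. a k * b k) $$ (i,j)" using i j by (simp add: dmat_def)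
qed auto

lemma sf_dmat: assumes "y \<in> carrier_vec n"
  shows "sf (dmat n d) y y = complex_of_real (\<Sum>k<n. d k * (cmod (y$k))\<^sup>2)"
proof -
  have "sf (dmat n d) y y = (\<Sum>i<n. \<Sum>j<n. cnj (y$i) * (if i = j then complex_of_real (d i) else 0) * y$j)"
    unfolding sf_def by (simp add: dmat_def)
  also have "\<dots> = (\<Sum>i<n. cnj (y$i) * complex_of_real (d i) * y$i)"
  proof (rule sum.cong[OF refl])
    fix i assume i: "i \<in> {..<n}"
    have "(\<Sum>j<n. cnj (y$i) * (if i = j then complex_of_real (d i) else 0) * y$j) =
      (\<Sum>j<n. if j = i then cnj (y$i) * complex_of_real (d i) * y$i else 0)"
      by (rule sum.cong, auto)
    also have "\<dots> = cnj (y$i) * complex_of_real (d i) * y$i" using i by simp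
    finally show "(\<Sum>j<n. cnj (y$i) * (if i = j then complex_of_real (d i) else 0) * y$j) = cnj (y$i) * complex_of_real (d i) * y$i" .
  qed
  also have "\<dots> = (\<Sum>i<n. complex_of_real (d i * (cmod (y$i))\<^sup>2))"
  proof (rule sum.cong[OF refl])
    fix i
    have "cnj (y$i) * complex_of_real (d i) * y$i = complex_of_real (d i) * (y$i * cnj (y$i))" by (simp add: algebra_simps)
    also have "y$i * cnj (y$i) = complex_of_real ((cmod (y$i))\<^sup>2)" by (rule complex_norm_square[symmetric])
    finally show "cnj (y$i) * complex_of_real (d i) * y$i = complex_of_real (d i * (cmod (y$i))\<^sup>2)" by simp
  qed
  finally show ?thesis by (simp only: of_real_sum)
qed

lemma sf_conj: assumes V: "V \<in> carrier_mat n n" and Z: "Z \<in> carrier_mat n n" and x: "x \<in> carrier_vec n" and y: "y \<in> carrier_vec n"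
  shows "sf (V * Z * mat_adjoint V) x y = sf Z (mat_adjoint V *\<^sub>v x) (mat_adjoint V *\<^sub>v y)"
proof -
  have Va: "mat_adjoint V \<in> carrier_mat n n" using V by auto
  have "sf (V * Z * mat_adjoint V) x y = sf (mat_adjoint (mat_adjoint V) * Z * mat_adjoint V) x y" by simp
  also have "\<dots> = sf (mat_adjoint (mat_adjoint V) * Z) x (mat_adjoint V *\<^sub>v y)"
    by (rule sf_mult[of _ n n _ n], insert V Z y, auto)
  also have "\<dots> = sf Z (mat_adjoint V *\<^sub>v x) (mat_adjoint V *\<^sub>v y)"
    by (rule sf_adj_mult[of _ n n _ n], insert Va Z x, auto)
  finally show ?thesis .
qed

lemma conj_mult: assumes V: "(V::complex mat) \<in> carrier_mat n n" and VV: "mat_adjoint V * V = 1\<^sub>m n"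
  and A: "A \<in> carrier_mat n n" and B: "B \<in> carrier_mat n n"
  shows "(V * A * mat_adjoint V) * (V * B * mat_adjoint V) = V * (A * B) * mat_adjoint V"
proof -
  have Va: "mat_adjoint V \<in> carrier_mat n n" using V by auto
  have BV: "B * mat_adjoint V \<in> carrier_mat n n" using B Va by auto
  have "(V * A * mat_adjoint V) * (V * B * mat_adjoint V) = V * (A * (mat_adjoint V * (V * (B * mat_adjoint V))))"
    using V A B Va by (simp add: assoc_mult_mat[of _ n n _ n _ n])
  also have "mat_adjoint V * (V * (B * mat_adjoint V)) = B * mat_adjoint V"
    using assoc_mult_mat[OF Va V BV] VV left_mult_one_mat[OF BV] by simp
  also have "V * (A * (B * mat_adjoint V)) = V * (A * B) * mat_adjoint V" using V A B Va by (simp add: assoc_mult_mat[of _ n n _ n _ n])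
  finally show ?thesis .
qed


lemma herm_decomp: assumes M: "(M::complex mat) \<in> carrier_mat n n" and H: "mat_adjoint M = M"
  shows "\<exists>V d. V \<in> carrier_mat n n \<and> mat_adjoint V * V = 1\<^sub>m n \<and> V * mat_adjoint V = 1\<^sub>m n \<and>
     M = V * dmat n d * mat_adjoint V"
proof -
  obtain V D where VD: "V \<in> carrier_mat n n" "D \<in> carrier_mat n n" "mat_adjoint V * V = 1\<^sub>m n"
    "diagonal_mat D" "M = V * D * mat_adjoint V" using spectral_aux[OF M H] by blast
  have Va: "mat_adjoint V \<in> carrier_mat n n" using VD by auto
  have VV: "V * mat_adjoint V = 1\<^sub>m n" using unitary_right VD by auto
  have e1: "mat_adjoint V * (V * D) = D" using assoc_mult_mat[OF Va VD(1) VD(2), symmetric] VD(3) VD(2) by simp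
  have "mat_adjoint V * M * V = D"
    unfolding VD(5) using VD Va e1 by (simp add: assoc_mult_mat[of _ n n _ n _ n])
  hence DM: "D = mat_adjoint V * M * V" by simp
  have DH: "mat_adjoint D = D"
  proof -
    have "mat_adjoint D = mat_adjoint V * mat_adjoint (mat_adjoint V * M)"
      unfolding DM by (rule adj_mult[of _ n n], insert Va M VD(1), auto)
    also have "mat_adjoint (mat_adjoint V * M) = mat_adjoint M * V"
      by (subst adj_mult[of _ n n], insert Va M VD(1), auto)
    finally have "mat_adjoint D = mat_adjoint V * (M * V)" unfolding H .
    also have "\<dots> = D" unfolding DM using assoc_mult_mat[OF Va M VD(1)] by simp
    finally show ?thesis .
  qed
  define d where "d k = Re (D $$ (k,k))" for k
  have "D = dmat n d"
  proof (rule eq_matI)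
    fix i j assume "i < dim_row (dmat n d)" "j < dim_col (dmat n d)"
    hence i: "i < n" and j: "j < n" by auto
    show "D $$ (i,j) = dmat n d $$ (i,j)"
    proof (cases "i = j")
      case True
      have "cnj (D $$ (i,i)) = D $$ (i,i)" using arg_cong[OF DH, of "\<lambda>X. X $$ (i,i)"] VD i by auto
      hence "Im (D $$ (i,i)) = 0" by (metis cnj.simps(2) neg_equal_zero)
      then show ?thesis using True i unfolding dmat_def d_def by (auto intro: complex_eqI)
    next
      case False
      then show ?thesis using VD(2,4) i j unfolding dmat_def diagonal_mat_def by auto
    qed
  qed (insert VD, auto)
  thus ?thesis using VD VV by blast
qed

lemma psd_decomp: assumes P: "psd M" and M: "M \<in> carrier_mat n n"
  shows "\<exists>V d. V \<in> carrier_mat n n \<and> mat_adjoint V * V = 1\<^sub>m n \<and> V * mat_adjoint V = 1\<^sub>m n \<and>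
     (\<forall>k<n. d k \<ge> 0) \<and> M = V * dmat n d * mat_adjoint V"
proof -
  obtain V d where Vd: "V \<in> carrier_mat n n" "mat_adjoint V * V = 1\<^sub>m n" "V * mat_adjoint V = 1\<^sub>m n"
    "M = V * dmat n d * mat_adjoint V" using herm_decomp[OF M psd_herm[OF P]] by blast
  have Va: "mat_adjoint V \<in> carrier_mat n n" using Vd by auto
  have dM: "dim_row M = n" using M by auto
  have "d k \<ge> 0" if k: "k < n" for k
  proof -
    define x where "x = V *\<^sub>v unit_vec n k"
    have x: "x \<in> carrier_vec n" unfolding x_def using Vd by auto
    have y: "mat_adjoint V *\<^sub>v x = unit_vec n k" unfolding x_def
      using assoc_mult_mat_vec[OF Va Vd(1), of "unit_vec n k"] Vd(2) by auto
    have "sf M x x = sf (dmat n d) (unit_vec n k) (unit_vec n k)"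
      using sf_conj[OF Vd(1) dmat_carrier x x] Vd(4) y by simp
    also have "\<dots> = complex_of_real (d k)" using sf_unit_n[OF dmat_carrier k k] k by (simp add: dmat_def)
    finally have "sf M x x = complex_of_real (d k)" .
    moreover have "0 \<le> Re (sf M x x)" using P x unfolding psd_sf[OF dM] by auto
    ultimately show ?thesis by simp
  qed
  thus ?thesis using Vd by blast
qed

lemma psd_sqrt: assumes P: "psd M" and M: "M \<in> carrier_mat n n"
  shows "\<exists>R. psd R \<and> R \<in> carrier_mat n n \<and> R * R = M"
proof -
  obtain V d where Vd: "V \<in> carrier_mat n n" "mat_adjoint V * V = 1\<^sub>m n" "V * mat_adjoint V = 1\<^sub>m n"
    "\<forall>k<n. d k \<ge> 0" "M = V * dmat n d * mat_adjoint V" using psd_decomp[OF P M] by blast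
  define R where "R = V * dmat n (\<lambda>k. sqrt (d k)) * mat_adjoint V"
  have R: "R \<in> carrier_mat n n" unfolding R_def using Vd by auto
  have "R * R = V * (dmat n (\<lambda>k. sqrt (d k)) * dmat n (\<lambda>k. sqrt (d k))) * mat_adjoint V"
    unfolding R_def by (rule conj_mult[OF Vd(1,2)], auto)
  also have "dmat n (\<lambda>k. sqrt (d k)) * dmat n (\<lambda>k. sqrt (d k)) = dmat n d"
    unfolding dmat_mult using Vd(4) by (auto simp: dmat_def intro!: eq_matI)
  finally have RR: "R * R = M" using Vd by simp
  have dR: "dim_row R = n" using R by auto
  have "psd R" unfolding psd_sf[OF dR]
  proof (intro conjI ballI)
    fix x :: "complex vec" assume x: "x \<in> carrier_vec n"
    have Va: "mat_adjoint V \<in> carrier_mat n n" using Vd by auto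
    have y: "mat_adjoint V *\<^sub>v x \<in> carrier_vec n" using Va x by auto
    have "sf R x x = complex_of_real (\<Sum>k<n. sqrt (d k) * (cmod ((mat_adjoint V *\<^sub>v x)$k))\<^sup>2)"
      unfolding R_def using sf_conj[OF Vd(1) dmat_carrier x x] sf_dmat[OF y] by simp
    moreover have "(\<Sum>k<n. sqrt (d k) * (cmod ((mat_adjoint V *\<^sub>v x)$k))\<^sup>2) \<ge> 0"
      using Vd(4) by (intro sum_nonneg, auto)
    ultimately show "sf R x x \<in> \<real>" "0 \<le> Re (sf R x x)" by auto
  qed (rule R)
  thus ?thesis using R RR by blast
qed


lemma psd_zero: assumes P: "psd Q" and Q: "Q \<in> carrier_mat n n" and x: "x \<in> carrier_vec n"
  and z: "sf Q x x = 0"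
  shows "Q *\<^sub>v x = 0\<^sub>v n"
proof -
  obtain V d where Vd: "V \<in> carrier_mat n n" "mat_adjoint V * V = 1\<^sub>m n" "V * mat_adjoint V = 1\<^sub>m n"
    "\<forall>k<n. d k \<ge> 0" "Q = V * dmat n d * mat_adjoint V" using psd_decomp[OF P Q] by blast
  have Va: "mat_adjoint V \<in> carrier_mat n n" using Vd by auto
  define y where "y = mat_adjoint V *\<^sub>v x"
  have y: "y \<in> carrier_vec n" unfolding y_def using Va x by auto
  have "sf Q x x = complex_of_real (\<Sum>k<n. d k * (cmod (y$k))\<^sup>2)"
    unfolding y_def using sf_conj[OF Vd(1) dmat_carrier x x] sf_dmat[OF y[unfolded y_def]] Vd(5) by simp
  hence s0: "(\<Sum>k<n. d k * (cmod (y$k))\<^sup>2) = 0" using z by (metis of_real_eq_0_iff)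
  have "\<forall>k\<in>{..<n}. d k * (cmod (y$k))\<^sup>2 = 0"
    using sum_nonneg_eq_0_iff[of "{..<n}" "\<lambda>k. d k * (cmod (y$k))\<^sup>2"] s0 Vd(4) by auto
  hence dy: "dmat n d *\<^sub>v y = 0\<^sub>v n"
    using y by (intro eq_vecI, auto simp: dmat_def scalar_prod_def atLeast0LessThan if_distrib sum.delta cong: if_cong)
  have "Q *\<^sub>v x = V *\<^sub>v (dmat n d *\<^sub>v y)" unfolding Vd(5) y_def
    using Vd(1) Va x assoc_mult_mat_vec[OF Vd(1) dmat_carrier y[unfolded y_def]] by (simp add: assoc_mult_mat_vec[of _ n n _ n])
  thus ?thesis unfolding dy using Vd(1) by auto
qed


lemma dmat_unit: "k < n \<Longrightarrow> dmat n l *\<^sub>v unit_vec n k = complex_of_real (l k) \<cdot>\<^sub>v unit_vec n k"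
  by (intro eq_vecI, auto simp: dmat_def scalar_prod_def atLeast0LessThan if_distrib sum.delta cong: if_cong)

lemma psd_unique: assumes P1: "psd Q1" and Q1: "Q1 \<in> carrier_mat n n" and P2: "psd Q2" and Q2: "Q2 \<in> carrier_mat n n"
  and E: "Q1 * Q1 = Q2 * Q2"
  shows "Q1 = Q2"
proof -
  define D where "D = Q1 - Q2"
  have D: "D \<in> carrier_mat n n" unfolding D_def using Q1 Q2 by auto
  have H1: "mat_adjoint Q1 = Q1" by (rule psd_herm[OF P1])
  have H2: "mat_adjoint Q2 = Q2" by (rule psd_herm[OF P2])
  have DH: "mat_adjoint D = D" unfolding D_def using adj_minus[OF Q1 Q2] H1 H2 by simp
  obtain V l where Vl: "V \<in> carrier_mat n n" "mat_adjoint V * V = 1\<^sub>m n" "V * mat_adjoint V = 1\<^sub>m n"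
    "D = V * dmat n l * mat_adjoint V" using herm_decomp[OF D DH] by blast
  have Va: "mat_adjoint V \<in> carrier_mat n n" using Vl by auto
  have l0: "l k = 0" if k: "k < n" for k
  proof (rule ccontr)
    assume lk: "l k \<noteq> 0"
    define c where "c = complex_of_real (l k)"
    have c0: "c \<noteq> 0" and cc: "cnj c = c" unfolding c_def using lk by auto
    define v where "v = V *\<^sub>v unit_vec n k"
    have v: "v \<in> carrier_vec n" unfolding v_def using Vl by auto
    have Vav: "mat_adjoint V *\<^sub>v v = unit_vec n k" unfolding v_def
      using assoc_mult_mat_vec[OF Va Vl(1), of "unit_vec n k"] Vl(2) by auto
    have Dv: "D *\<^sub>v v = c \<cdot>\<^sub>v v"
    proof -
      have "D *\<^sub>v v = V *\<^sub>v (dmat n l *\<^sub>v (mat_adjoint V *\<^sub>v v))" unfolding Vl(4)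
        using assoc_mult_mat_vec[OF Vl(1) dmat_carrier, of "mat_adjoint V *\<^sub>v v" l] Va v
          assoc_mult_mat_vec[of "V * dmat n l" n n "mat_adjoint V" n v] Vl(1) by auto
      also have "\<dots> = V *\<^sub>v (c \<cdot>\<^sub>v unit_vec n k)" unfolding Vav c_def using dmat_unit[OF k] by simp
      also have "\<dots> = c \<cdot>\<^sub>v v" unfolding v_def using Vl(1) by (simp add: mult_mat_vec)
      finally show ?thesis .
    qed
    have v0: "v \<noteq> 0\<^sub>v n"
    proof
      assume "v = 0\<^sub>v n"
      hence "mat_adjoint V *\<^sub>v v = 0\<^sub>v n" using Va by (intro eq_vecI, auto simp: scalar_prod_def)
      hence "unit_vec n k = (0\<^sub>v n :: complex vec)" using Vav by simp
      thus False using k by (metis index_unit_vec(2) index_zero_vec(1) zero_neq_one)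
    qed
    have Q1v: "Q1 *\<^sub>v v = Q2 *\<^sub>v v + c \<cdot>\<^sub>v v"
    proof -
      have "D *\<^sub>v v = Q1 *\<^sub>v v - Q2 *\<^sub>v v" unfolding D_def by (rule minus_mult_distrib_mat_vec[OF Q1 Q2 v])
      thus ?thesis unfolding Dv using Q1 Q2 v by (intro eq_vecI, auto simp: algebra_simps)
    qed
    have Q1vc: "Q1 *\<^sub>v v \<in> carrier_vec n" "Q2 *\<^sub>v v \<in> carrier_vec n" "c \<cdot>\<^sub>v v \<in> carrier_vec n" using Q1 Q2 v by auto
    define s1 where "s1 = sf Q1 v v"
    define s2 where "s2 = sf Q2 v v"
    have dQ: "dim_row Q1 = n" "dim_col Q1 = n" "dim_row Q2 = n" "dim_col Q2 = n" using Q1 Q2 by auto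
    have "sf (Q1 * Q1) v v = sf Q1 v (Q1 *\<^sub>v v)" by (rule sf_mult[OF Q1 Q1 v])
    also have "\<dots> = sf Q1 v (Q2 *\<^sub>v v) + c * s1" unfolding Q1v s1_def
      using sf_add_right[of "Q2 *\<^sub>v v" Q1 "c \<cdot>\<^sub>v v" v] sf_smult_right[of v Q1 v c] Q1vc v dQ by simp
    also have "sf Q1 v (Q2 *\<^sub>v v) = sf (mat_adjoint Q1 * Q2) v v" unfolding H1 by (rule sf_mult[OF Q1 Q2 v, symmetric])
    also have "\<dots> = sf Q2 (Q1 *\<^sub>v v) v" by (rule sf_adj_mult[OF Q1 Q2 v])
    also have "\<dots> = sf Q2 (Q2 *\<^sub>v v) v + cnj c * s2" unfolding Q1v s2_def
      using sf_add_left[of "Q2 *\<^sub>v v" Q2 "c \<cdot>\<^sub>v v" v] sf_smult_left[of v Q2 c v] Q1vc v dQ by simp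
    also have "sf Q2 (Q2 *\<^sub>v v) v = sf (mat_adjoint Q2 * Q2) v v" by (rule sf_adj_mult[OF Q2 Q2 v, symmetric])
    finally have "sf (Q1 * Q1) v v = sf (Q2 * Q2) v v + c * (s1 + s2)" unfolding H2 cc by (simp add: algebra_simps)
    hence "c * (s1 + s2) = 0" unfolding E by simp
    hence s12: "s1 + s2 = 0" using c0 by simp
    have "s1 \<in> \<real>" "0 \<le> Re s1" using P1 v unfolding s1_def psd_sf[OF dQ(1)] by auto
    moreover have "s2 \<in> \<real>" "0 \<le> Re s2" using P2 v unfolding s2_def psd_sf[OF dQ(3)] by auto
    ultimately have "s1 = 0" "s2 = 0" using s12
      by (auto simp: complex_is_Real_iff complex_eq_iff)
    hence "Q1 *\<^sub>v v = 0\<^sub>v n" "Q2 *\<^sub>v v = 0\<^sub>v n" using psd_zero[OF P1 Q1 v] psd_zero[OF P2 Q2 v]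
      unfolding s1_def s2_def by auto
    hence cv: "c \<cdot>\<^sub>v v = 0\<^sub>v n" using Q1v Q1vc(3) by auto
    have "v = 0\<^sub>v n"
    proof (rule eq_vecI)
      fix i assume "i < dim_vec (0\<^sub>v n :: complex vec)"
      hence i: "i < n" by simp
      have "(c \<cdot>\<^sub>v v) $ i = 0" using cv i by simp
      hence "c * v $ i = 0" using i v by simp
      thus "v $ i = 0\<^sub>v n $ i" using c0 i by simp
    qed (insert v, auto)
    thus False using v0 by simp
  qed
  have "dmat n l = 0\<^sub>m n n" using l0 by (auto simp: dmat_def intro!: eq_matI)
  hence "D = 0\<^sub>m n n" unfolding Vl(4) using Vl(1) Va by simp
  show ?thesis
  proof (rule eq_matI)
    fix i j assume "i < dim_row Q2" "j < dim_col Q2"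
    hence i: "i < n" and j: "j < n" using Q2 by auto
    have "D $$ (i,j) = 0" using \<open>D = 0\<^sub>m n n\<close> i j by simp
    thus "Q1 $$ (i,j) = Q2 $$ (i,j)" unfolding D_def using Q1 Q2 i j by simp
  qed (insert Q1 Q2, auto)
qed


lemma one_dmat: "1\<^sub>m n = dmat n (\<lambda>_. 1)"
  by (intro eq_matI, auto simp: dmat_def)

lemma mat_abs_prop: assumes P: "(P::complex mat) \<in> carrier_mat n n"
  shows "psd (mat_abs P) \<and> mat_abs P \<in> carrier_mat n n \<and> mat_abs P * mat_abs P = mat_adjoint P * P"
proof -
  define M where "M = mat_adjoint P * P"
  have Pa: "mat_adjoint P \<in> carrier_mat n n" using P by auto
  have M: "M \<in> carrier_mat n n" unfolding M_def using P Pa by auto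
  have dM: "dim_row M = n" using M by auto
  have PM: "psd M" unfolding psd_sf[OF dM]
  proof (intro conjI ballI)
    fix v :: "complex vec" assume v: "v \<in> carrier_vec n"
    have Pv: "P *\<^sub>v v \<in> carrier_vec n" using P v by auto
    have "sf M v v = sf P (P *\<^sub>v v) v" unfolding M_def by (rule sf_adj_mult[OF P P v])
    also have "\<dots> = sf (1\<^sub>m n * P) (P *\<^sub>v v) v" using P by simp
    also have "\<dots> = sf (1\<^sub>m n) (P *\<^sub>v v) (P *\<^sub>v v)" by (rule sf_mult[OF one_carrier_mat P v])
    also have "\<dots> = complex_of_real (\<Sum>k<n. 1 * (cmod ((P *\<^sub>v v)$k))\<^sup>2)" unfolding one_dmat by (rule sf_dmat[OF Pv])
    finally have e: "sf M v v = complex_of_real (\<Sum>k<n. 1 * (cmod ((P *\<^sub>v v)$k))\<^sup>2)" .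
    have "(\<Sum>k<n. 1 * (cmod ((P *\<^sub>v v)$k))\<^sup>2) \<ge> 0" by (intro sum_nonneg, auto)
    thus "sf M v v \<in> \<real>" "0 \<le> Re (sf M v v)" unfolding e by auto
  qed (rule M)
  obtain R where R: "psd R" "R \<in> carrier_mat n n" "R * R = M" using psd_sqrt[OF PM M] by blast
  have "mat_abs P = R" unfolding mat_abs_def
  proof (rule the_equality)
    show "psd R \<and> dim_row R = dim_col P \<and> R * R = mat_adjoint P * P" using R P unfolding M_def by auto
  next
    fix Q assume Q: "psd Q \<and> dim_row Q = dim_col P \<and> Q * Q = mat_adjoint P * P"
    have dQ: "dim_row Q = n" using Q P by auto
    have Qc: "Q \<in> carrier_mat n n" using Q unfolding psd_sf[OF dQ] by auto
    show "Q = R" by (rule psd_unique[OF _ Qc R(1) R(2)], insert Q R, auto simp: M_def)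
  qed
  thus ?thesis using R unfolding M_def by auto
qed


lemma sum_split: fixes m d :: nat shows "(\<Sum>r<m*d. f r) = (\<Sum>i<m. \<Sum>a<d. f (i*d + a))"
proof -
  have "(\<Sum>r<m*d. f r) = (\<Sum>i<m. \<Sum>r\<in>{i*d..<i*d+d}. f r)" by (rule sum.nat_group[symmetric])
  also have "\<dots> = (\<Sum>i<m. \<Sum>a<d. f (i*d + a))"
  proof (rule sum.cong[OF refl])
    fix i
    have "(\<Sum>r\<in>{i*d..<i*d+d}. f r) = (\<Sum>r\<in>{0+i*d..<d+i*d}. f r)" by (simp add: add.commute)
    also have "\<dots> = (\<Sum>a\<in>{0..<d}. f (a + i*d))" by (rule sum.shift_bounds_nat_ivl)
    finally show "(\<Sum>r\<in>{i*d..<i*d+d}. f r) = (\<Sum>a<d. f (i*d + a))" by (simp add: atLeast0LessThan add.commute)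
  qed
  finally show ?thesis .
qed

lemma idx_div: "(a::nat) < d \<Longrightarrow> (i*d + a) div d = i" by simp
lemma idx_mod: "(a::nat) < d \<Longrightarrow> (i*d + a) mod d = a" by simp
lemma idx_lt: "(i::nat) < m \<Longrightarrow> a < d \<Longrightarrow> i*d + a < m*d"
proof -
  assume "i < m" "a < d"
  hence "i*d + a < i*d + d" by simp
  also have "\<dots> = (i+1)*d" by simp
  also have "\<dots> \<le> m*d" using \<open>i < m\<close> by (intro mult_right_mono, auto)
  finally show ?thesis .
qed

definition subv :: "nat \<Rightarrow> complex vec \<Rightarrow> nat \<Rightarrow> complex vec" where
  "subv d u i = vec d (\<lambda>a. u $ (i*d + a))"

lemma subv_carrier[simp]: "subv d u i \<in> carrier_vec d" unfolding subv_def by auto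

lemma block_carrier[simp]: "block d M i j \<in> carrier_mat d d" unfolding block_def by auto
lemma block_dim[simp]: "dim_row (block d M i j) = d" "dim_col (block d M i j) = d" unfolding block_def by auto

lemma block_sf: assumes M: "M \<in> carrier_mat (m*d) (m*d)"
  shows "sf M u w = (\<Sum>i<m. \<Sum>j<m. sf (block d M i j) (subv d u i) (subv d w j))"
proof -
  have "sf M u w = (\<Sum>r<m*d. \<Sum>c<m*d. cnj (u $ r) * M $$ (r,c) * w $ c)" unfolding sf_def using M by auto
  also have "\<dots> = (\<Sum>i<m. \<Sum>a<d. \<Sum>j<m. \<Sum>b<d. cnj (u $ (i*d+a)) * M $$ (i*d+a,j*d+b) * w $ (j*d+b))"
    by (simp add: sum_split)
  also have "\<dots> = (\<Sum>i<m. \<Sum>j<m. \<Sum>a<d. \<Sum>b<d. cnj (u $ (i*d+a)) * M $$ (i*d+a,j*d+b) * w $ (j*d+b))"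
    by (rule sum.cong[OF refl], rule sum.swap)
  also have "\<dots> = (\<Sum>i<m. \<Sum>j<m. sf (block d M i j) (subv d u i) (subv d w j))"
    unfolding sf_def block_def subv_def by (intro sum.cong refl, auto)
  finally show ?thesis .
qed

lemma sf_sum: assumes T: "\<And>k. k < n \<Longrightarrow> T k \<in> carrier_mat d d"
  shows "sf (mat d d (\<lambda>ac. \<Sum>k<n. c k * T k $$ ac)) x y = (\<Sum>k<n. c k * sf (T k) x y)"
proof -
  have "sf (mat d d (\<lambda>ac. \<Sum>k<n. c k * T k $$ ac)) x y = (\<Sum>a<d. \<Sum>b<d. \<Sum>k<n. c k * (cnj (x$a) * T k $$ (a,b) * y$b))"
    unfolding sf_def by (auto simp: sum_distrib_left sum_distrib_right mult_ac intro!: sum.cong)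
  also have "\<dots> = (\<Sum>a<d. \<Sum>k<n. \<Sum>b<d. c k * (cnj (x$a) * T k $$ (a,b) * y$b))"
    by (rule sum.cong[OF refl], rule sum.swap)
  also have "\<dots> = (\<Sum>k<n. \<Sum>a<d. \<Sum>b<d. c k * (cnj (x$a) * T k $$ (a,b) * y$b))"
    by (rule sum.swap)
  also have "\<dots> = (\<Sum>k<n. c k * sf (T k) x y)" unfolding sf_def using T
    by (auto simp: sum_distrib_left intro!: sum.cong)
  finally show ?thesis .
qed

lemma sf_conj2: assumes A: "A \<in> carrier_mat m n" and Z: "Z \<in> carrier_mat m k" and B: "B \<in> carrier_mat k l"
  and x: "x \<in> carrier_vec n" and y: "y \<in> carrier_vec l"
  shows "sf (mat_adjoint A * Z * B) x y = sf Z (A *\<^sub>v x) (B *\<^sub>v y)"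
proof -
  have "sf (mat_adjoint A * Z * B) x y = sf (mat_adjoint A * Z) x (B *\<^sub>v y)"
    by (rule sf_mult[of _ n k], insert A Z B y, auto)
  also have "\<dots> = sf Z (A *\<^sub>v x) (B *\<^sub>v y)" by (rule sf_adj_mult[OF A Z x])
  finally show ?thesis .
qed

lemma sf_minus_left: "u1 \<in> carrier_vec (dim_row M) \<Longrightarrow> u2 \<in> carrier_vec (dim_row M) \<Longrightarrow>
  sf M (u1 - u2) w = sf M u1 w - sf M u2 w"
  unfolding sf_def by (simp add: algebra_simps sum_subtractf)

lemma sf_minus_right: "w1 \<in> carrier_vec (dim_col M) \<Longrightarrow> w2 \<in> carrier_vec (dim_col M) \<Longrightarrow>
  sf M u (w1 - w2) = sf M u w1 - sf M u w2"
  unfolding sf_def by (simp add: algebra_simps sum_subtractf)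

lemma mtrace_comm: assumes A: "(A::complex mat) \<in> carrier_mat n m" and B: "B \<in> carrier_mat m n"
  shows "mtrace (A * B) = mtrace (B * A)"
proof -
  have "mtrace (A*B) = (\<Sum>i<n. \<Sum>k<m. A$$(i,k) * B$$(k,i))" unfolding mtrace_def using assms
    by (auto simp: scalar_prod_def atLeast0LessThan intro!: sum.cong)
  also have "\<dots> = (\<Sum>k<m. \<Sum>i<n. B$$(k,i) * A$$(i,k))" by (subst sum.swap) (simp add: mult.commute)
  also have "\<dots> = mtrace (B*A)" unfolding mtrace_def using assms
    by (auto simp: scalar_prod_def atLeast0LessThan intro!: sum.cong)
  finally show ?thesis .
qed

lemma mtrace_conj: assumes V: "(V::complex mat) \<in> carrier_mat n n" and VV: "mat_adjoint V * V = 1\<^sub>m n"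
  and t: "t \<in> carrier_mat n n"
  shows "mtrace (V * t * mat_adjoint V) = mtrace t"
proof -
  have Va: "mat_adjoint V \<in> carrier_mat n n" using V by auto
  have "mtrace (V * t * mat_adjoint V) = mtrace (mat_adjoint V * (V * t))"
    by (rule mtrace_comm[of _ n n], insert V t Va, auto)
  also have "mat_adjoint V * (V * t) = t" using assoc_mult_mat[OF Va V t, symmetric] VV t by simp
  finally show ?thesis .
qed

lemma trace_sf: assumes V: "(V::complex mat) \<in> carrier_mat d d" and X: "X \<in> carrier_mat d d" and W: "W \<in> carrier_mat d d"
  shows "(\<Sum>b<d. sf X (mat_adjoint V *\<^sub>v unit_vec d b) (mat_adjoint W *\<^sub>v unit_vec d b)) = mtrace (V * X * mat_adjoint W)"
proof -
  have Va: "mat_adjoint V \<in> carrier_mat d d" using V by auto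
  have Wa: "mat_adjoint W \<in> carrier_mat d d" using W by auto
  have "(\<Sum>b<d. sf X (mat_adjoint V *\<^sub>v unit_vec d b) (mat_adjoint W *\<^sub>v unit_vec d b)) =
    (\<Sum>b<d. sf (V * X * mat_adjoint W) (unit_vec d b) (unit_vec d b))"
  proof (rule sum.cong[OF refl])
    fix b assume b: "b \<in> {..<d}"
    show "sf X (mat_adjoint V *\<^sub>v unit_vec d b) (mat_adjoint W *\<^sub>v unit_vec d b) = sf (V * X * mat_adjoint W) (unit_vec d b) (unit_vec d b)"
      using sf_conj2[OF Va X Wa, of "unit_vec d b" "unit_vec d b"] by simp
  qed
  also have "\<dots> = (\<Sum>b<d. (V * X * mat_adjoint W) $$ (b,b))"
    by (rule sum.cong[OF refl], rule sf_unit_n, insert V X Wa, auto)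
  also have "\<dots> = mtrace (V * X * mat_adjoint W)" unfolding mtrace_def using V by simp
  finally show ?thesis .
qed


lemma mtrace_sf: assumes Q: "Q \<in> carrier_mat n n"
  shows "mtrace Q = (\<Sum>a<n. sf Q (unit_vec n a) (unit_vec n a))"
  unfolding mtrace_def using Q sf_unit_n[OF Q] by (intro sum.cong, auto)

lemma psd_trace: assumes P: "psd Q" and Q: "Q \<in> carrier_mat n n"
  shows "mtrace Q = complex_of_real (Re (mtrace Q))" "Re (mtrace Q) \<ge> 0"
proof -
  have dQ: "dim_row Q = n" using Q by auto
  have h: "\<And>a. a < n \<Longrightarrow> sf Q (unit_vec n a) (unit_vec n a) \<in> \<real> \<and> 0 \<le> Re (sf Q (unit_vec n a) (unit_vec n a))"
    using P unfolding psd_sf[OF dQ] by auto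
  have "mtrace Q \<in> \<real>" unfolding mtrace_sf[OF Q] using h by (intro sum_in_Reals, auto)
  thus "mtrace Q = complex_of_real (Re (mtrace Q))" by (simp add: complex_is_Real_iff complex_eq_iff)
  show "Re (mtrace Q) \<ge> 0" unfolding mtrace_sf[OF Q] Re_sum using h by (intro sum_nonneg, auto)
qed

lemma psd_trace0: assumes P: "psd Q" and Q: "Q \<in> carrier_mat n n" and t: "Re (mtrace Q) = 0"
  shows "Q = 0\<^sub>m n n"
proof -
  have dQ: "dim_row Q = n" using Q by auto
  have h: "\<And>a. a < n \<Longrightarrow> sf Q (unit_vec n a) (unit_vec n a) \<in> \<real> \<and> 0 \<le> Re (sf Q (unit_vec n a) (unit_vec n a))"
    using P unfolding psd_sf[OF dQ] by auto
  have "(\<Sum>a<n. Re (sf Q (unit_vec n a) (unit_vec n a))) = 0" using t unfolding mtrace_sf[OF Q] Re_sum .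
  hence z: "\<forall>a\<in>{..<n}. Re (sf Q (unit_vec n a) (unit_vec n a)) = 0"
    using sum_nonneg_eq_0_iff[of "{..<n}" "\<lambda>a. Re (sf Q (unit_vec n a) (unit_vec n a))"] h by auto
  have col0: "Q *\<^sub>v unit_vec n a = 0\<^sub>v n" if a: "a < n" for a
  proof (rule psd_zero[OF P Q])
    show "unit_vec n a \<in> carrier_vec n" by auto
    have "sf Q (unit_vec n a) (unit_vec n a) \<in> \<real>" using h a by auto
    thus "sf Q (unit_vec n a) (unit_vec n a) = 0" using z a by (auto simp: complex_is_Real_iff complex_eq_iff)
  qed
  show ?thesis
  proof (rule eq_matI)
    fix i j assume "i < dim_row (0\<^sub>m n n :: complex mat)" "j < dim_col (0\<^sub>m n n :: complex mat)"
    hence i: "i < n" and j: "j < n" by auto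
    have "Q $$ (i,j) = (Q *\<^sub>v unit_vec n j) $ i" using Q i j by (simp add: scalar_prod_right_unit)
    also have "\<dots> = 0" unfolding col0[OF j] using i by simp
    finally show "Q $$ (i,j) = 0\<^sub>m n n $$ (i,j)" using i j by simp
  qed (insert Q, auto)
qed

lemma psd_conj2: assumes P: "psd X" and X: "X \<in> carrier_mat n n" and V: "V \<in> carrier_mat n n"
  shows "psd (mat_adjoint V * X * V)"
proof -
  have Y: "mat_adjoint V * X * V \<in> carrier_mat n n" using X V by auto
  have dY: "dim_row (mat_adjoint V * X * V) = n" using Y by auto
  have dX: "dim_row X = n" using X by auto
  show ?thesis unfolding psd_sf[OF dY]
  proof (intro conjI ballI)
    fix x :: "complex vec" assume x: "x \<in> carrier_vec n"
    have "sf (mat_adjoint V * X * V) x x = sf X (V *\<^sub>v x) (V *\<^sub>v x)" by (rule sf_conj2[OF V X V x x])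
    moreover have "V *\<^sub>v x \<in> carrier_vec n" using V x by auto
    ultimately show "sf (mat_adjoint V * X * V) x x \<in> \<real>" "0 \<le> Re (sf (mat_adjoint V * X * V) x x)"
      using P unfolding psd_sf[OF dX] by auto
  qed (rule Y)
qed

lemma psd_smult: assumes P: "psd X" and c: "c \<ge> 0"
  shows "psd (complex_of_real c \<cdot>\<^sub>m X)"
proof -
  obtain n where dX: "dim_row X = n" by auto
  have dY: "dim_row (complex_of_real c \<cdot>\<^sub>m X) = n" using dX by auto
  have X: "X \<in> carrier_mat n n" using P unfolding psd_sf[OF dX] by auto
  show ?thesis unfolding psd_sf[OF dY]
  proof (intro conjI ballI)
    fix x :: "complex vec" assume x: "x \<in> carrier_vec n"
    have h: "sf X x x \<in> \<real>" "0 \<le> Re (sf X x x)" using P x unfolding psd_sf[OF dX] by auto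
    show "sf (complex_of_real c \<cdot>\<^sub>m X) x x \<in> \<real>" unfolding sf_mat_smult using h by auto
    show "0 \<le> Re (sf (complex_of_real c \<cdot>\<^sub>m X) x x)" unfolding sf_mat_smult using h c by auto
  qed (insert X, auto)
qed

lemma psd_sum: assumes P: "\<And>j. j < m \<Longrightarrow> psd (Q j)" and Q: "\<And>j. j < m \<Longrightarrow> Q j \<in> carrier_mat n n"
  shows "psd (mat n n (\<lambda>ac. \<Sum>j<m. Q j $$ ac))"
proof -
  have dY: "dim_row (mat n n (\<lambda>ac. \<Sum>j<m. Q j $$ ac)) = n" by auto
  show ?thesis unfolding psd_sf[OF dY]
  proof (intro conjI ballI)
    fix x :: "complex vec" assume x: "x \<in> carrier_vec n"
    have e: "sf (mat n n (\<lambda>ac. \<Sum>j<m. Q j $$ ac)) x x = (\<Sum>j<m. sf (Q j) x x)"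
      using sf_sum[of m Q n "\<lambda>_. 1" x x] Q by simp
    have h: "\<And>j. j < m \<Longrightarrow> sf (Q j) x x \<in> \<real> \<and> 0 \<le> Re (sf (Q j) x x)"
    proof -
      fix j assume j: "j < m"
      have dQ: "dim_row (Q j) = n" using Q[OF j] by auto
      show "sf (Q j) x x \<in> \<real> \<and> 0 \<le> Re (sf (Q j) x x)" using P[OF j] x unfolding psd_sf[OF dQ] by auto
    qed
    show "sf (mat n n (\<lambda>ac. \<Sum>j<m. Q j $$ ac)) x x \<in> \<real>" unfolding e using h by (intro sum_in_Reals, auto)
    show "0 \<le> Re (sf (mat n n (\<lambda>ac. \<Sum>j<m. Q j $$ ac)) x x)" unfolding e Re_sum using h by (intro sum_nonneg, auto)
  qed auto
qed


lemma adj_mult3: assumes "(A::complex mat) \<in> carrier_mat n n" "B \<in> carrier_mat n n" "C \<in> carrier_mat n n"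
  shows "mat_adjoint (A * B * C) = mat_adjoint C * mat_adjoint B * mat_adjoint A"
proof -
  have "mat_adjoint (A * B * C) = mat_adjoint C * mat_adjoint (A * B)" by (rule adj_mult[of _ n n], insert assms, auto)
  also have "mat_adjoint (A * B) = mat_adjoint B * mat_adjoint A" by (rule adj_mult[of _ n n], insert assms, auto)
  finally show ?thesis using assms by (simp add: assoc_mult_mat[of _ n n _ n _ n])
qed

lemma sandwich: assumes "(A::complex mat) \<in> carrier_mat n n" "B \<in> carrier_mat n n" "C \<in> carrier_mat n n"
  "D \<in> carrier_mat n n" "E \<in> carrier_mat n n"
  shows "A * (B * C * D) * E = (A * B) * C * (D * E)"
  using assms by (simp add: assoc_mult_mat[of _ n n _ n _ n])

context
  fixes dA dB :: nat and \<rho> :: "complex mat" and U :: "nat \<Rightarrow> complex mat"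
  assumes dA: "0 < dA" and dB: "0 < dB"
    and st: "is_state (dA * dB) \<rho>"
    and un: "\<forall>i<dA. is_unitary dB (U i)"
    and hyp: "\<forall>i<dA. \<forall>j<dA. U i * block dB \<rho> i j * mat_adjoint (U j) = mat_abs (block dB \<rho> i j)"
begin

lemma rho: "\<rho> \<in> carrier_mat (dA*dB) (dA*dB)" "psd \<rho>" "mtrace \<rho> = 1"
  using st unfolding is_state_def by auto

lemma Uc: "i < dA \<Longrightarrow> U i \<in> carrier_mat dB dB" using un unfolding is_unitary_def by auto
lemma UU: "i < dA \<Longrightarrow> U i * mat_adjoint (U i) = 1\<^sub>m dB" using un unfolding is_unitary_def by auto
lemma UaU: "i < dA \<Longrightarrow> mat_adjoint (U i) * U i = 1\<^sub>m dB" using unitary_left[OF Uc UU] by auto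
lemma Uac: "i < dA \<Longrightarrow> mat_adjoint (U i) \<in> carrier_mat dB dB" using Uc by auto

lemma Q_prop: "i < dA \<Longrightarrow> j < dA \<Longrightarrow> psd (mat_abs (block dB \<rho> i j)) \<and> mat_abs (block dB \<rho> i j) \<in> carrier_mat dB dB"
  using mat_abs_prop[OF block_carrier] by blast

lemma Q_eq: "i < dA \<Longrightarrow> j < dA \<Longrightarrow> mat_abs (block dB \<rho> i j) = U i * block dB \<rho> i j * mat_adjoint (U j)"
  using hyp by auto

lemma B_eq: assumes i: "i < dA" and j: "j < dA"
  shows "block dB \<rho> i j = mat_adjoint (U i) * mat_abs (block dB \<rho> i j) * U j"
proof -
  let ?B = "block dB \<rho> i j"
  have B: "?B \<in> carrier_mat dB dB" by simp
  have "mat_adjoint (U i) * (U i * ?B * mat_adjoint (U j)) * U j = (mat_adjoint (U i) * U i) * ?B * (mat_adjoint (U j) * U j)"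
    by (rule sandwich[OF Uac[OF i] Uc[OF i] B Uac[OF j] Uc[OF j]])
  also have "\<dots> = ?B" using UaU[OF i] UaU[OF j] B by simp
  finally show ?thesis using Q_eq[OF i j] by simp
qed

lemma rho_herm: "r < dA*dB \<Longrightarrow> c < dA*dB \<Longrightarrow> \<rho> $$ (r,c) = cnj (\<rho> $$ (c,r))"
proof -
  assume r: "r < dA*dB" and c: "c < dA*dB"
  have "mat_adjoint \<rho> $$ (r,c) = \<rho> $$ (r,c)" using psd_herm[OF rho(2)] by simp
  thus ?thesis using r c rho(1) by auto
qed

lemma B_adj: assumes i: "i < dA" and j: "j < dA"
  shows "block dB \<rho> j i = mat_adjoint (block dB \<rho> i j)"
proof (rule eq_matI)
  fix a c assume "a < dim_row (mat_adjoint (block dB \<rho> i j))" "c < dim_col (mat_adjoint (block dB \<rho> i j))"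
  hence a: "a < dB" and c: "c < dB" by (auto simp: block_def)
  show "block dB \<rho> j i $$ (a,c) = mat_adjoint (block dB \<rho> i j) $$ (a,c)"
    using a c rho_herm[OF idx_lt[OF j a] idx_lt[OF i c]] by (simp add: block_def)
qed (auto simp: block_def)

lemma Q_sym: assumes i: "i < dA" and j: "j < dA"
  shows "mat_abs (block dB \<rho> j i) = mat_abs (block dB \<rho> i j)"
proof -
  have "mat_abs (block dB \<rho> j i) = U j * mat_adjoint (block dB \<rho> i j) * mat_adjoint (U i)"
    using Q_eq[OF j i] B_adj[OF i j] by simp
  also have "\<dots> = mat_adjoint (U i * block dB \<rho> i j * mat_adjoint (U j))"
    using adj_mult3[OF Uc[OF i] block_carrier Uac[OF j]] by simp
  also have "\<dots> = mat_adjoint (mat_abs (block dB \<rho> i j))" using Q_eq[OF i j] by simp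
  also have "\<dots> = mat_abs (block dB \<rho> i j)" using psd_herm Q_prop[OF i j] by blast
  finally show ?thesis .
qed

definition tt where "tt i j = Re (mtrace (mat_abs (block dB \<rho> i j)))"

lemma tt_nonneg: "i < dA \<Longrightarrow> j < dA \<Longrightarrow> tt i j \<ge> 0"
  unfolding tt_def using psd_trace(2) Q_prop by blast

lemma tt_real: "i < dA \<Longrightarrow> j < dA \<Longrightarrow> mtrace (mat_abs (block dB \<rho> i j)) = complex_of_real (tt i j)"
  unfolding tt_def using psd_trace(1) Q_prop by blast

lemma tt_diag: "i < dA \<Longrightarrow> mtrace (mat_abs (block dB \<rho> i i)) = mtrace (block dB \<rho> i i)"
  using Q_eq mtrace_conj[OF Uc UaU block_carrier] by simp

lemma trace_rho_split: "mtrace \<rho> = (\<Sum>i<dA. mtrace (block dB \<rho> i i))"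
  unfolding mtrace_def using rho(1) by (simp add: sum_split block_def)

lemma total: "(\<Sum>i<dA. \<Sum>j<dA. tt i j) = 1 + C_l1 dA dB \<rho>"
proof -
  have "(\<Sum>i<dA. \<Sum>j<dA. tt i j) = (\<Sum>i<dA. tt i i + (\<Sum>j\<in>{..<dA} - {i}. tt i j))"
    by (rule sum.cong[OF refl], rule sum.remove, auto)
  also have "\<dots> = (\<Sum>i<dA. tt i i) + C_l1 dA dB \<rho>" unfolding C_l1_def trace_norm_def tt_def by (simp add: sum.distrib)
  also have "(\<Sum>i<dA. tt i i) = Re (\<Sum>i<dA. mtrace (block dB \<rho> i i))"
    unfolding Re_sum tt_def by (rule sum.cong, auto simp: tt_diag)
  also have "\<dots> = 1" using trace_rho_split rho(3) by simp
  finally show ?thesis .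
qed

lemma C_l1_nonneg: "C_l1 dA dB \<rho> \<ge> 0"
  unfolding C_l1_def trace_norm_def using tt_nonneg unfolding tt_def by (intro sum_nonneg, auto)

definition wv where "wv b = vec (dA*dB) (\<lambda>r. cnj (U (r div dB) $$ (b, r mod dB)))"

lemma wv_carrier: "wv b \<in> carrier_vec (dA*dB)" unfolding wv_def by auto

lemma subv_wv: assumes i: "i < dA" and b: "b < dB"
  shows "subv dB (wv b) i = mat_adjoint (U i) *\<^sub>v unit_vec dB b"
proof (rule eq_vecI)
  fix a assume "a < dim_vec (mat_adjoint (U i) *\<^sub>v unit_vec dB b)"
  hence a: "a < dB" using Uc[OF i] by auto
  have "subv dB (wv b) i $ a = cnj (U i $$ (b, a))"
    unfolding subv_def wv_def using a idx_lt[OF i a] by simp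
  also have "\<dots> = (mat_adjoint (U i) *\<^sub>v unit_vec dB b) $ a" using a b Uc[OF i] by simp
  finally show "subv dB (wv b) i $ a = (mat_adjoint (U i) *\<^sub>v unit_vec dB b) $ a" .
qed (insert Uc[OF i], auto simp: subv_def)

lemma swap3: "(\<Sum>b<(n::nat). \<Sum>i<(m::nat). \<Sum>j<m. f b i j) = (\<Sum>i<m. \<Sum>j<m. \<Sum>b<n. f b i j)"
proof -
  have "(\<Sum>b<n. \<Sum>i<m. \<Sum>j<m. f b i j) = (\<Sum>i<m. \<Sum>b<n. \<Sum>j<m. f b i j)" by (rule sum.swap)
  also have "\<dots> = (\<Sum>i<m. \<Sum>j<m. \<Sum>b<n. f b i j)" by (rule sum.cong[OF refl], rule sum.swap)
  finally show ?thesis .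
qed

lemma sum_sf_rho: "(\<Sum>b<dB. sf \<rho> (wv b) (wv b)) = complex_of_real (\<Sum>i<dA. \<Sum>j<dA. tt i j)"
proof -
  have "(\<Sum>b<dB. sf \<rho> (wv b) (wv b)) = (\<Sum>b<dB. \<Sum>i<dA. \<Sum>j<dA.
      sf (block dB \<rho> i j) (mat_adjoint (U i) *\<^sub>v unit_vec dB b) (mat_adjoint (U j) *\<^sub>v unit_vec dB b))"
    using block_sf[OF rho(1)] subv_wv by (intro sum.cong refl, auto)
  also have "\<dots> = (\<Sum>i<dA. \<Sum>j<dA. \<Sum>b<dB.
      sf (block dB \<rho> i j) (mat_adjoint (U i) *\<^sub>v unit_vec dB b) (mat_adjoint (U j) *\<^sub>v unit_vec dB b))"
    by (rule swap3)
  also have "\<dots> = (\<Sum>i<dA. \<Sum>j<dA. complex_of_real (tt i j))"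
    using trace_sf[OF Uc block_carrier Uc] Q_eq tt_real by (intro sum.cong refl, auto)
  finally show ?thesis by (simp only: of_real_sum)
qed

lemma IQ_sum: assumes \<sigma>: "\<sigma> \<in> IQ dA dB"
  shows "\<sigma> \<in> carrier_mat (dA*dB) (dA*dB)" "(\<Sum>b<dB. sf \<sigma> (wv b) (wv b)) = 1"
proof -
  obtain n :: nat and p :: "nat \<Rightarrow> real" and s t where pst: "\<forall>k<n. 0 \<le> p k \<and> is_state dA (s k) \<and> is_diagonal (s k) \<and> is_state dB (t k)"
    "(\<Sum>k<n. p k) = 1"
    "\<sigma> = mat (dA * dB) (dA * dB) (\<lambda>rc. \<Sum>k<n. complex_of_real (p k) * kron (s k) (t k) $$ rc)"
    using \<sigma> unfolding IQ_def by blast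
  show sc: "\<sigma> \<in> carrier_mat (dA*dB) (dA*dB)" using pst(3) by auto
  have sk: "\<And>k. k < n \<Longrightarrow> s k \<in> carrier_mat dA dA" and tk: "\<And>k. k < n \<Longrightarrow> t k \<in> carrier_mat dB dB"
    using pst(1) unfolding is_state_def by auto
  have blk: "block dB \<sigma> i j = mat dB dB (\<lambda>ac. \<Sum>k<n. (complex_of_real (p k) * s k $$ (i,j)) * t k $$ ac)"
    if i: "i < dA" and j: "j < dA" for i j
  proof (rule eq_matI)
    fix a c assume "a < dim_row (mat dB dB (\<lambda>ac. \<Sum>k<n. (complex_of_real (p k) * s k $$ (i,j)) * t k $$ ac))"
      "c < dim_col (mat dB dB (\<lambda>ac. \<Sum>k<n. (complex_of_real (p k) * s k $$ (i,j)) * t k $$ ac))"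
    hence a: "a < dB" and c: "c < dB" by auto
    have "block dB \<sigma> i j $$ (a,c) = (\<Sum>k<n. complex_of_real (p k) * kron (s k) (t k) $$ (i*dB+a, j*dB+c))"
      unfolding block_def pst(3) using a c idx_lt[OF i a] idx_lt[OF j c] by simp
    also have "\<dots> = (\<Sum>k<n. (complex_of_real (p k) * s k $$ (i,j)) * t k $$ (a,c))"
    proof (rule sum.cong[OF refl])
      fix k assume "k \<in> {..<n}"
      hence k: "k < n" by auto
      have "kron (s k) (t k) $$ (i*dB+a, j*dB+c) = s k $$ (i,j) * t k $$ (a,c)"
        unfolding kron_def using sk[OF k] tk[OF k] a c idx_lt[OF i a] idx_lt[OF j c] by simp
      thus "complex_of_real (p k) * kron (s k) (t k) $$ (i*dB+a, j*dB+c) = (complex_of_real (p k) * s k $$ (i,j)) * t k $$ (a,c)"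
        by simp
    qed
    finally show "block dB \<sigma> i j $$ (a,c) = mat dB dB (\<lambda>ac. \<Sum>k<n. (complex_of_real (p k) * s k $$ (i,j)) * t k $$ ac) $$ (a,c)"
      using a c by simp
  qed auto
  have tm: "(\<Sum>b<dB. sf (block dB \<sigma> i j) (mat_adjoint (U i) *\<^sub>v unit_vec dB b) (mat_adjoint (U j) *\<^sub>v unit_vec dB b))
     = (if i = j then (\<Sum>k<n. complex_of_real (p k) * s k $$ (i,i)) else 0)"
    if i: "i < dA" and j: "j < dA" for i j
  proof -
    have "(\<Sum>b<dB. sf (block dB \<sigma> i j) (mat_adjoint (U i) *\<^sub>v unit_vec dB b) (mat_adjoint (U j) *\<^sub>v unit_vec dB b))
      = (\<Sum>b<dB. \<Sum>k<n. (complex_of_real (p k) * s k $$ (i,j)) * sf (t k) (mat_adjoint (U i) *\<^sub>v unit_vec dB b) (mat_adjoint (U j) *\<^sub>v unit_vec dB b))"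
      unfolding blk[OF i j] using sf_sum[of n t dB] tk by (intro sum.cong refl, auto)
    also have "\<dots> = (\<Sum>k<n. (complex_of_real (p k) * s k $$ (i,j)) * (\<Sum>b<dB. sf (t k) (mat_adjoint (U i) *\<^sub>v unit_vec dB b) (mat_adjoint (U j) *\<^sub>v unit_vec dB b)))"
      by (subst sum.swap, simp add: sum_distrib_left)
    also have "\<dots> = (\<Sum>k<n. (complex_of_real (p k) * s k $$ (i,j)) * mtrace (U i * t k * mat_adjoint (U j)))"
      using trace_sf[OF Uc[OF i] tk Uc[OF j]] by (intro sum.cong refl, auto)
    also have "\<dots> = (if i = j then (\<Sum>k<n. complex_of_real (p k) * s k $$ (i,i)) else 0)"
    proof (cases "i = j")
      case True
      have h1: "mtrace (U i * t k * mat_adjoint (U i)) = 1" if k: "k < n" for k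
        using mtrace_conj[OF Uc[OF i] UaU[OF i] tk[OF k]] pst(1) k unfolding is_state_def by auto
      have "(\<Sum>k<n. (complex_of_real (p k) * s k $$ (i,j)) * mtrace (U i * t k * mat_adjoint (U j))) =
        (\<Sum>k<n. complex_of_real (p k) * s k $$ (i,i))"
        by (rule sum.cong[OF refl]) (insert h1 True, auto)
      thus ?thesis using True by simp
    next
      case False
      have "s k $$ (i,j) = 0" if k: "k < n" for k
        using pst(1) k sk[OF k] i j False unfolding is_diagonal_def by auto
      thus ?thesis using False by auto
    qed
    finally show ?thesis .
  qed
  have "(\<Sum>b<dB. sf \<sigma> (wv b) (wv b)) = (\<Sum>b<dB. \<Sum>i<dA. \<Sum>j<dA.
      sf (block dB \<sigma> i j) (mat_adjoint (U i) *\<^sub>v unit_vec dB b) (mat_adjoint (U j) *\<^sub>v unit_vec dB b))"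
    using block_sf[OF sc] subv_wv by (intro sum.cong refl, auto)
  also have "\<dots> = (\<Sum>i<dA. \<Sum>j<dA. \<Sum>b<dB.
      sf (block dB \<sigma> i j) (mat_adjoint (U i) *\<^sub>v unit_vec dB b) (mat_adjoint (U j) *\<^sub>v unit_vec dB b))"
    by (rule swap3)
  also have "\<dots> = (\<Sum>i<dA. \<Sum>j<dA. (if i = j then (\<Sum>k<n. complex_of_real (p k) * s k $$ (i,i)) else 0))"
    using tm by (intro sum.cong refl, auto)
  also have "\<dots> = (\<Sum>i<dA. \<Sum>k<n. complex_of_real (p k) * s k $$ (i,i))"
    by (rule sum.cong[OF refl], auto simp: sum.delta)
  also have "\<dots> = (\<Sum>k<n. complex_of_real (p k) * mtrace (s k))"
    unfolding mtrace_def using sk by (subst sum.swap, auto simp: sum_distrib_left intro!: sum.cong)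
  also have "\<dots> = (\<Sum>k<n. complex_of_real (p k))"
    using pst(1) unfolding is_state_def by (intro sum.cong refl, auto)
  also have "\<dots> = 1" using pst(2) by (simp flip: of_real_sum)
  finally show "(\<Sum>b<dB. sf \<sigma> (wv b) (wv b)) = 1" .
qed

lemma LB: assumes \<sigma>: "\<sigma> \<in> IQ dA dB" and le: "loewner_le \<rho> (complex_of_real c \<cdot>\<^sub>m \<sigma>)"
  shows "1 + C_l1 dA dB \<rho> \<le> c"
proof -
  have sc: "\<sigma> \<in> carrier_mat (dA*dB) (dA*dB)" by (rule IQ_sum(1)[OF \<sigma>])
  let ?X = "complex_of_real c \<cdot>\<^sub>m \<sigma>"
  have X: "?X \<in> carrier_mat (dA*dB) (dA*dB)" using sc by auto
  have D: "?X - \<rho> \<in> carrier_mat (dA*dB) (dA*dB)" using X rho(1) by auto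
  have dD: "dim_row (?X - \<rho>) = dA*dB" using D by auto
  have P: "psd (?X - \<rho>)" using le unfolding loewner_le_def by auto
  have "\<And>b. 0 \<le> Re (sf (?X - \<rho>) (wv b) (wv b))" using P wv_carrier unfolding psd_sf[OF dD] by auto
  hence "0 \<le> (\<Sum>b<dB. Re (sf (?X - \<rho>) (wv b) (wv b)))" by (intro sum_nonneg, auto)
  also have "(\<Sum>b<dB. Re (sf (?X - \<rho>) (wv b) (wv b))) = Re (complex_of_real c * (\<Sum>b<dB. sf \<sigma> (wv b) (wv b)) - (\<Sum>b<dB. sf \<rho> (wv b) (wv b)))"
    unfolding Re_sum[symmetric] using sf_mat_minus[OF X rho(1)] sf_mat_smult
    by (simp add: sum_subtractf sum_distrib_left)
  also have "\<dots> = c - (\<Sum>i<dA. \<Sum>j<dA. tt i j)" unfolding IQ_sum(2)[OF \<sigma>] sum_sf_rho by simp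
  finally show ?thesis using total by simp
qed

definition TT where "TT = 1 + C_l1 dA dB \<rho>"
definition Xs where "Xs i = mat dB dB (\<lambda>ac. \<Sum>j<dA. mat_abs (block dB \<rho> i j) $$ ac)"
definition Ym where "Ym i = mat_adjoint (U i) * Xs i * U i"
definition tau where "tau i = Re (mtrace (Ym i))"
definition p0 where "p0 i = tau i / TT"
definition s0 where "s0 i = dmat dA (\<lambda>k. if k = i then 1 else 0)"
definition t0 where "t0 i = (if tau i = 0 then dmat dB (\<lambda>k. if k = 0 then 1 else 0) else complex_of_real (1 / tau i) \<cdot>\<^sub>m Ym i)"
definition sigma0 where "sigma0 = mat (dA*dB) (dA*dB) (\<lambda>rc. \<Sum>i<dA. complex_of_real (p0 i) * kron (s0 i) (t0 i) $$ rc)"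

lemma TT_pos: "TT \<ge> 1" unfolding TT_def using C_l1_nonneg by simp

lemma Xs_carrier: "Xs i \<in> carrier_mat dB dB" unfolding Xs_def by auto
lemma Xs_psd: "i < dA \<Longrightarrow> psd (Xs i)" unfolding Xs_def by (rule psd_sum, insert Q_prop, auto)
lemma Ym_carrier: assumes i: "i < dA" shows "Ym i \<in> carrier_mat dB dB"
proof -
  have "mat_adjoint (U i) * Xs i \<in> carrier_mat dB dB" by (rule mult_carrier_mat[OF Uac[OF i] Xs_carrier])
  thus ?thesis unfolding Ym_def by (rule mult_carrier_mat[OF _ Uc[OF i]])
qed
lemma Ym_psd: "i < dA \<Longrightarrow> psd (Ym i)" unfolding Ym_def by (rule psd_conj2[OF Xs_psd Xs_carrier Uc])

lemma tau_real: "i < dA \<Longrightarrow> mtrace (Ym i) = complex_of_real (tau i)"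
  unfolding tau_def using psd_trace(1)[OF Ym_psd Ym_carrier] by auto
lemma tau_nonneg: "i < dA \<Longrightarrow> tau i \<ge> 0"
  unfolding tau_def using psd_trace(2)[OF Ym_psd Ym_carrier] by auto

lemma tau_sum: "i < dA \<Longrightarrow> tau i = (\<Sum>j<dA. tt i j)"
proof -
  assume i: "i < dA"
  have "mtrace (Ym i) = mtrace (mat_adjoint (U i) * Xs i * mat_adjoint (mat_adjoint (U i)))" unfolding Ym_def by simp
  also have "\<dots> = mtrace (Xs i)"
    by (rule mtrace_conj[OF Uac[OF i] _ Xs_carrier], insert UU[OF i], simp)
  also have "\<dots> = (\<Sum>a<dB. \<Sum>j<dA. mat_abs (block dB \<rho> i j) $$ (a,a))" unfolding Xs_def mtrace_def by simp
  also have "\<dots> = (\<Sum>j<dA. mtrace (mat_abs (block dB \<rho> i j)))"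
  proof -
    have dq: "\<And>j. j < dA \<Longrightarrow> dim_row (mat_abs (block dB \<rho> i j)) = dB" using Q_prop[OF i] by auto
    show ?thesis unfolding mtrace_def using dq by (subst sum.swap, intro sum.cong refl, auto)
  qed
  finally show ?thesis unfolding tau_def tt_def by (simp add: Re_sum)
qed

lemma tau_total: "(\<Sum>i<dA. tau i) = TT" unfolding TT_def using total tau_sum by simp

lemma psd_dmat: "(\<And>k. k < n \<Longrightarrow> d k \<ge> 0) \<Longrightarrow> psd (dmat n d)"
proof -
  assume d: "\<And>k. k < n \<Longrightarrow> d k \<ge> 0"
  have dd: "dim_row (dmat n d) = n" by simp
  show ?thesis unfolding psd_sf[OF dd]
  proof (intro conjI ballI)
    fix x :: "complex vec" assume x: "x \<in> carrier_vec n"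
    have "(\<Sum>k<n. d k * (cmod (x$k))\<^sup>2) \<ge> 0" using d by (intro sum_nonneg, auto)
    thus "sf (dmat n d) x x \<in> \<real>" "0 \<le> Re (sf (dmat n d) x x)" unfolding sf_dmat[OF x] by auto
  qed auto
qed

lemma mtrace_dmat: "mtrace (dmat n d) = complex_of_real (\<Sum>k<n. d k)"
  unfolding mtrace_def by (simp add: dmat_def)

lemma dmat_unit_state: "i < n \<Longrightarrow> is_state n (dmat n (\<lambda>k. if k = i then 1 else 0))"
proof -
  assume i: "i < n"
  have "mtrace (dmat n (\<lambda>k. if k = i then 1 else 0)) = (\<Sum>k<n. if k = i then 1 else 0)"
    unfolding mtrace_def dmat_def by (intro sum.cong, auto)
  also have "\<dots> = 1" using i by simp
  finally show ?thesis unfolding is_state_def using psd_dmat[of n "\<lambda>k. if k = i then 1 else 0"] by auto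
qed

lemma sigma0_IQ: "sigma0 \<in> IQ dA dB"
proof -
  have T: "TT > 0" using TT_pos by simp
  have "\<forall>i<dA. 0 \<le> p0 i \<and> is_state dA (s0 i) \<and> is_diagonal (s0 i) \<and> is_state dB (t0 i)"
  proof (intro allI impI conjI)
    fix i assume i: "i < dA"
    show "0 \<le> p0 i" unfolding p0_def using tau_nonneg[OF i] T by simp
    show "is_state dA (s0 i)" unfolding s0_def by (rule dmat_unit_state[OF i])
    show "is_diagonal (s0 i)" unfolding s0_def is_diagonal_def dmat_def by auto
    show "is_state dB (t0 i)"
    proof (cases "tau i = 0")
      case True thus ?thesis unfolding t0_def using dmat_unit_state[OF dB] by simp
    next
      case False
      hence tp: "tau i > 0" using tau_nonneg[OF i] by simp
      have "psd (complex_of_real (1 / tau i) \<cdot>\<^sub>m Ym i)" by (rule psd_smult[OF Ym_psd[OF i]], insert tp, simp)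
      moreover have "mtrace (complex_of_real (1 / tau i) \<cdot>\<^sub>m Ym i) = 1"
        using tau_real[OF i] Ym_carrier[OF i] tp unfolding mtrace_def
        by (simp add: sum_divide_distrib[symmetric])
      ultimately show ?thesis unfolding t0_def is_state_def using False Ym_carrier[OF i] by auto
    qed
  qed
  moreover have "(\<Sum>i<dA. p0 i) = 1" unfolding p0_def using tau_total T by (simp add: sum_divide_distrib[symmetric])
  ultimately show ?thesis unfolding IQ_def sigma0_def by blast
qed

lemma t0_carrier: "i < dA \<Longrightarrow> t0 i \<in> carrier_mat dB dB"
  unfolding t0_def using Ym_carrier by auto

lemma sigma0_carrier: "sigma0 \<in> carrier_mat (dA*dB) (dA*dB)" unfolding sigma0_def by auto

lemma p0t0: assumes i: "i < dA" and a: "a < dB" and c: "c < dB"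
  shows "complex_of_real (p0 i) * t0 i $$ (a,c) = complex_of_real (1 / TT) * Ym i $$ (a,c)"
proof (cases "tau i = 0")
  case True
  have "Ym i = 0\<^sub>m dB dB" by (rule psd_trace0[OF Ym_psd[OF i] Ym_carrier[OF i]], insert True, simp add: tau_def)
  thus ?thesis unfolding p0_def using True a c by simp
next
  case False
  have T: "TT > 0" using TT_pos by simp
  have "complex_of_real (p0 i) * t0 i $$ (a,c) = complex_of_real (tau i / TT) * (complex_of_real (1 / tau i) * Ym i $$ (a,c))"
    unfolding p0_def t0_def using False Ym_carrier[OF i] a c by simp
  also have "\<dots> = complex_of_real (tau i / TT * (1 / tau i)) * Ym i $$ (a,c)" by simp
  also have "tau i / TT * (1 / tau i) = 1 / TT" using False by simp
  finally show ?thesis .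
qed

lemma sigma0_block: assumes i: "i < dA" and j: "j < dA"
  shows "block dB sigma0 i j = (if i = j then complex_of_real (1 / TT) \<cdot>\<^sub>m Ym i else 0\<^sub>m dB dB)"
proof (rule eq_matI)
  fix a c assume "a < dim_row (if i = j then complex_of_real (1 / TT) \<cdot>\<^sub>m Ym i else 0\<^sub>m dB dB)"
    "c < dim_col (if i = j then complex_of_real (1 / TT) \<cdot>\<^sub>m Ym i else 0\<^sub>m dB dB)"
  hence a: "a < dB" and c: "c < dB" using Ym_carrier[OF i] by (auto split: if_splits)
  have "block dB sigma0 i j $$ (a,c) = (\<Sum>k<dA. complex_of_real (p0 k) * kron (s0 k) (t0 k) $$ (i*dB+a, j*dB+c))"
    unfolding block_def sigma0_def using a c idx_lt[OF i a] idx_lt[OF j c] by simp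
  also have "\<dots> = (\<Sum>k<dA. if k = i then (if i = j then complex_of_real (p0 i) * t0 i $$ (a,c) else 0) else 0)"
  proof (rule sum.cong[OF refl])
    fix k assume "k \<in> {..<dA}"
    hence k: "k < dA" by auto
    have "kron (s0 k) (t0 k) $$ (i*dB+a, j*dB+c) = s0 k $$ (i,j) * t0 k $$ (a,c)"
      unfolding kron_def using t0_carrier[OF k] a c idx_lt[OF i a] idx_lt[OF j c] by (simp add: s0_def)
    also have "s0 k $$ (i,j) = (if i = j \<and> k = i then 1 else 0)" unfolding s0_def dmat_def using i j by auto
    finally show "complex_of_real (p0 k) * kron (s0 k) (t0 k) $$ (i*dB+a, j*dB+c) =
      (if k = i then (if i = j then complex_of_real (p0 i) * t0 i $$ (a,c) else 0) else 0)" by auto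
  qed
  also have "\<dots> = (if i = j then complex_of_real (p0 i) * t0 i $$ (a,c) else 0)" using i by simp
  also have "\<dots> = (if i = j then complex_of_real (1 / TT) \<cdot>\<^sub>m Ym i else 0\<^sub>m dB dB) $$ (a,c)"
    using p0t0[OF i a c] Ym_carrier[OF i] a c by auto
  finally show "block dB sigma0 i j $$ (a,c) = (if i = j then complex_of_real (1 / TT) \<cdot>\<^sub>m Ym i else 0\<^sub>m dB dB) $$ (a,c)" .
qed (insert Ym_carrier[OF i], auto)

lemma sf_zero_mat: "sf (0\<^sub>m n m) x y = 0" unfolding sf_def by simp

lemma UB_psd: "psd (complex_of_real TT \<cdot>\<^sub>m sigma0 - \<rho>)"
proof -
  let ?D = "complex_of_real TT \<cdot>\<^sub>m sigma0 - \<rho>"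
  have S: "complex_of_real TT \<cdot>\<^sub>m sigma0 \<in> carrier_mat (dA*dB) (dA*dB)" using sigma0_carrier by auto
  have D: "?D \<in> carrier_mat (dA*dB) (dA*dB)" using S rho(1) by auto
  have dD: "dim_row ?D = dA*dB" using D by auto
  have T: "TT > 0" using TT_pos by simp
  let ?Q = "\<lambda>i j. mat_abs (block dB \<rho> i j)"
  show ?thesis unfolding psd_sf[OF dD]
  proof (intro conjI ballI)
    fix v :: "complex vec" assume v: "v \<in> carrier_vec (dA*dB)"
    define y where "y i = U i *\<^sub>v subv dB v i" for i
    have yc: "\<And>i. i < dA \<Longrightarrow> y i \<in> carrier_vec dB" unfolding y_def by (metis Uc mult_mat_vec_carrier subv_carrier)
    have sfY: "sf (Ym i) (subv dB v i) (subv dB v i) = (\<Sum>j<dA. sf (?Q i j) (y i) (y i))" if i: "i < dA" for i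
    proof -
      have "sf (Ym i) (subv dB v i) (subv dB v i) = sf (Xs i) (y i) (y i)"
        unfolding Ym_def y_def by (rule sf_conj2[OF Uc[OF i] Xs_carrier Uc[OF i]], auto)
      also have "\<dots> = (\<Sum>j<dA. 1 * sf (?Q i j) (y i) (y i))" unfolding Xs_def
        using sf_sum[of dA "?Q i" dB "\<lambda>_. 1" "y i" "y i"] Q_prop[OF i] by simp
      finally show ?thesis by simp
    qed
    have sfs: "sf sigma0 v v = complex_of_real (1 / TT) * (\<Sum>i<dA. \<Sum>j<dA. sf (?Q i j) (y i) (y i))"
    proof -
      have "sf sigma0 v v = (\<Sum>i<dA. \<Sum>j<dA. sf (block dB sigma0 i j) (subv dB v i) (subv dB v j))"
        by (rule block_sf[OF sigma0_carrier])
      also have "\<dots> = (\<Sum>i<dA. \<Sum>j<dA. if j = i then complex_of_real (1 / TT) * sf (Ym i) (subv dB v i) (subv dB v i) else 0)"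
        using sigma0_block by (intro sum.cong refl, auto simp: sf_mat_smult sf_zero_mat)
      also have "\<dots> = (\<Sum>i<dA. complex_of_real (1 / TT) * (\<Sum>j<dA. sf (?Q i j) (y i) (y i)))"
        using sfY by (intro sum.cong refl, auto)
      finally show ?thesis by (simp add: sum_distrib_left)
    qed
    have sfr: "sf \<rho> v v = (\<Sum>i<dA. \<Sum>j<dA. sf (?Q i j) (y i) (y j))"
    proof -
      have "sf \<rho> v v = (\<Sum>i<dA. \<Sum>j<dA. sf (block dB \<rho> i j) (subv dB v i) (subv dB v j))"
        by (rule block_sf[OF rho(1)])
      also have "\<dots> = (\<Sum>i<dA. \<Sum>j<dA. sf (?Q i j) (y i) (y j))"
      proof (intro sum.cong refl)
        fix i j assume "i \<in> {..<dA}" "j \<in> {..<dA}"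
        hence i: "i < dA" and j: "j < dA" by auto
        show "sf (block dB \<rho> i j) (subv dB v i) (subv dB v j) = sf (?Q i j) (y i) (y j)"
        proof -
          have "sf (block dB \<rho> i j) (subv dB v i) (subv dB v j) = sf (mat_adjoint (U i) * ?Q i j * U j) (subv dB v i) (subv dB v j)"
            by (subst B_eq[OF i j], rule refl)
          also have "\<dots> = sf (?Q i j) (y i) (y j)" unfolding y_def using Q_prop[OF i j]
            by (intro sf_conj2[OF Uc[OF i] _ Uc[OF j]], auto)
          finally show ?thesis .
        qed
      qed
      finally show ?thesis .
    qed
    define S where "S = (\<Sum>i<dA. \<Sum>j<dA. sf (?Q i j) (y i) (y i) - sf (?Q i j) (y i) (y j))"
    have eS: "sf ?D v v = S"
    proof -
      have "sf ?D v v = complex_of_real TT * sf sigma0 v v - sf \<rho> v v"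
        using sf_mat_minus[OF S rho(1)] sf_mat_smult by simp
      also have "\<dots> = (\<Sum>i<dA. \<Sum>j<dA. sf (?Q i j) (y i) (y i)) - (\<Sum>i<dA. \<Sum>j<dA. sf (?Q i j) (y i) (y j))"
        unfolding sfs sfr using T by simp
      finally show ?thesis unfolding S_def by (simp add: sum_subtractf)
    qed
    define F where "F i j = sf (?Q i j) (y i - y j) (y i - y j)" for i j
    have Fe: "F i j = sf (?Q i j) (y i) (y i) - sf (?Q i j) (y i) (y j) - sf (?Q i j) (y j) (y i) + sf (?Q i j) (y j) (y j)"
      if i: "i < dA" and j: "j < dA" for i j
    proof -
      have dq: "dim_row (?Q i j) = dB" "dim_col (?Q i j) = dB" using Q_prop[OF i j] by auto
      have yij: "y i - y j \<in> carrier_vec dB" using yc i j by auto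
      have yi: "y i \<in> carrier_vec (dim_row (?Q i j))" "y j \<in> carrier_vec (dim_row (?Q i j))"
        "y i \<in> carrier_vec (dim_col (?Q i j))" "y j \<in> carrier_vec (dim_col (?Q i j))"
        using yc[OF i] yc[OF j] dq by auto
      have e1: "F i j = sf (?Q i j) (y i) (y i - y j) - sf (?Q i j) (y j) (y i - y j)"
        unfolding F_def by (rule sf_minus_left[OF yi(1,2)])
      have e2: "sf (?Q i j) (y i) (y i - y j) = sf (?Q i j) (y i) (y i) - sf (?Q i j) (y i) (y j)"
        by (rule sf_minus_right[OF yi(3,4)])
      have e3: "sf (?Q i j) (y j) (y i - y j) = sf (?Q i j) (y j) (y i) - sf (?Q i j) (y j) (y j)"
        by (rule sf_minus_right[OF yi(3,4)])
      show ?thesis unfolding e1 e2 e3 by simp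
    qed
    have F: "F i j \<in> \<real> \<and> 0 \<le> Re (F i j)" if i: "i < dA" and j: "j < dA" for i j
    proof -
      have dq: "dim_row (?Q i j) = dB" using Q_prop[OF i j] by auto
      have "y i - y j \<in> carrier_vec dB" using yc i j by auto
      thus ?thesis using Q_prop[OF i j] unfolding F_def psd_sf[OF dq] by auto
    qed
    have sw1: "(\<Sum>i<dA. \<Sum>j<dA. sf (?Q i j) (y j) (y j)) = (\<Sum>i<dA. \<Sum>j<dA. sf (?Q i j) (y i) (y i))"
    proof -
      have "(\<Sum>i<dA. \<Sum>j<dA. sf (?Q i j) (y j) (y j)) = (\<Sum>j<dA. \<Sum>i<dA. sf (?Q i j) (y j) (y j))" by (rule sum.swap)
      also have "\<dots> = (\<Sum>j<dA. \<Sum>i<dA. sf (?Q j i) (y j) (y j))" using Q_sym by (intro sum.cong refl, auto)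
      finally show ?thesis .
    qed
    have sw2: "(\<Sum>i<dA. \<Sum>j<dA. sf (?Q i j) (y j) (y i)) = (\<Sum>i<dA. \<Sum>j<dA. sf (?Q i j) (y i) (y j))"
    proof -
      have "(\<Sum>i<dA. \<Sum>j<dA. sf (?Q i j) (y j) (y i)) = (\<Sum>j<dA. \<Sum>i<dA. sf (?Q i j) (y j) (y i))" by (rule sum.swap)
      also have "\<dots> = (\<Sum>j<dA. \<Sum>i<dA. sf (?Q j i) (y j) (y i))" using Q_sym by (intro sum.cong refl, auto)
      finally show ?thesis .
    qed
    have "(\<Sum>i<dA. \<Sum>j<dA. F i j) = (\<Sum>i<dA. \<Sum>j<dA. sf (?Q i j) (y i) (y i)) - (\<Sum>i<dA. \<Sum>j<dA. sf (?Q i j) (y i) (y j))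
       - (\<Sum>i<dA. \<Sum>j<dA. sf (?Q i j) (y j) (y i)) + (\<Sum>i<dA. \<Sum>j<dA. sf (?Q i j) (y j) (y j))"
      using Fe by (simp add: sum.distrib sum_subtractf)
    also have "\<dots> = 2 * S" unfolding sw1 sw2 S_def by (simp add: sum_subtractf)
    finally have FS: "(\<Sum>i<dA. \<Sum>j<dA. F i j) = 2 * S" .
    have "(\<Sum>i<dA. \<Sum>j<dA. F i j) \<in> \<real>" using F by (intro sum_in_Reals, auto)
    hence SR: "S \<in> \<real>" unfolding FS by (simp add: complex_is_Real_iff)
    have "0 \<le> Re (\<Sum>i<dA. \<Sum>j<dA. F i j)" unfolding Re_sum using F by (intro sum_nonneg, auto)
    hence SP: "0 \<le> Re S" unfolding FS by simp
    show "sf ?D v v \<in> \<real>" "0 \<le> Re (sf ?D v v)" unfolding eS using SR SP by auto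
  qed (rule D)
qed

lemma prop9_main: "C_max dA dB \<rho> = ereal (log 2 (1 + C_l1 dA dB \<rho>))"
proof -
  define L where "L = log 2 TT"
  have T1: "TT \<ge> 1" by (rule TT_pos)
  have L0: "L \<ge> 0" unfolding L_def using T1 by simp
  have pw: "2 powr L = TT" unfolding L_def using T1 by simp
  have lower: "ereal L \<le> D_max \<rho> \<sigma>" if \<sigma>: "\<sigma> \<in> IQ dA dB" for \<sigma>
    unfolding D_max_def
  proof (rule Inf_greatest)
    fix x assume "x \<in> {ereal l |l. 0 \<le> l \<and> loewner_le \<rho> (complex_of_real (2 powr l) \<cdot>\<^sub>m \<sigma>)}"
    then obtain l where x: "x = ereal l" and l: "0 \<le> l" "loewner_le \<rho> (complex_of_real (2 powr l) \<cdot>\<^sub>m \<sigma>)" by auto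
    have "TT \<le> 2 powr l" using LB[OF \<sigma> l(2)] unfolding TT_def by simp
    hence "log 2 TT \<le> log 2 (2 powr l)" using T1 by (subst log_le_cancel_iff, auto)
    thus "ereal L \<le> x" unfolding x L_def by simp
  qed
  have upper: "D_max \<rho> sigma0 \<le> ereal L" unfolding D_max_def
  proof (rule Inf_lower)
    have "loewner_le \<rho> (complex_of_real (2 powr L) \<cdot>\<^sub>m sigma0)"
      unfolding loewner_le_def pw using UB_psd rho(1) sigma0_carrier by auto
    thus "ereal L \<in> {ereal l |l. 0 \<le> l \<and> loewner_le \<rho> (complex_of_real (2 powr l) \<cdot>\<^sub>m sigma0)}"
      using L0 by auto
  qed
  have "C_max dA dB \<rho> \<le> ereal L" unfolding C_max_def
    using Inf_lower[of "D_max \<rho> sigma0" "D_max \<rho> ` IQ dA dB"] sigma0_IQ upper by auto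
  moreover have "ereal L \<le> C_max dA dB \<rho>" unfolding C_max_def
    using lower by (intro Inf_greatest, auto)
  ultimately show ?thesis unfolding L_def TT_def by simp
qed

end

theorem proposition9:
  fixes dA dB :: nat and \<rho> :: "complex mat" and U :: "nat \<Rightarrow> complex mat"
  assumes "0 < dA" and "0 < dB"
    and "is_state (dA * dB) \<rho>"
    and "\<forall>i<dA. is_unitary dB (U i)"
    and "\<forall>i<dA. \<forall>j<dA. U i * block dB \<rho> i j * mat_adjoint (U j) = mat_abs (block dB \<rho> i j)"
  shows "C_max dA dB \<rho> = ereal (log 2 (1 + C_l1 dA dB \<rho>))"
  using prop9_main[OF assms] .

end
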